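(* The forcing $\tilde{\mathbb E}$, with the functions $\operatorname{stem}$ and $\operatorname{loss}$ (defined on $Q'=\operatorname{dom}(\operatorname{loss})$), has strong FAM-limits for intervals: for every FAM $\Xi$ there is a function $\lim_\Xi:\tilde{\mathbb E}^\omega\to\tilde{\mathbb E}$ which is a strong FAM limit for intervals.
   Context: Fix an interval partition $(I_k)_{k\in\omega}$ of $\omega$ into finite intervals with $|I_k|\to\infty$. A partial FAM is a finitely additive probability measure on a Boolean subalgebra of $\mathcal P(\omega)$ containing all singletons and assigning them measure $0$; a FAM is a partial FAM with domain $\mathcal P(\omega)$. $T^*$, $\Omega_s$, $\mu_s$: defined by induction on height $h\ge0$: $T^*\cap\omega^0=\{\langle\rangle\}$; $\rho(h)=\max(|T^*\cap\omega^h|,h+2)$, $\pi(h)=((h+1)^2\rho(h)^{h+1})^{\rho(h)^h}$, $a(h)=\pi(h)^{h+2}$, $M(h)=a(h)^2$; each $s\in T^*\cap\omega^h$ has successor set $\Omega_s=\{s^\frown\ell:\ell<M(h)\}$; $\mu_s(A)=\log_{a(h)}\big(\frac{M(h)}{M(h)-|A|}\big)$ for $A\subsetneq\Omega_s$ and $\mu_s(\Omega_s)=\infty$. For a subtree $p\subseteq T^*$ and $s\in p$, $\mu_s(p)=\mu_s(p\cap\Omega_s)$; the stem of $p$ is its shortest splitting node. $\tilde{\mathbb E}$ consists of subtrees $p\subseteq T^*$ with stem of height $h^*$ such that $\mu_t(p)\ge1+\frac1{h^*}$ for all $t\in p$ extending the stem, ordered by inclusion. $\operatorname{stem}(p)$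 is the stem; $\operatorname{loss}(p)$ is defined iff there is an integer $m\ge2$ with stem height $h^*>3m$ and $\mu_s(p)\ge1+\frac1m$ for all $s\in p$ of height $\ge h^*$, and then $\operatorname{loss}(p)=\frac1m$ for the maximal such $m$. For a pair $(s^*,l^* )$, an $(s^*,l^* )$-sequence is a sequence $(q_\ell)_{\ell\in\omega}$ of conditions with $\operatorname{stem}(q_\ell)=s^*$ and $\operatorname{loss}(q_\ell)=l^*$ for all $\ell$. Given a FAM $\Xi$, a function $\lim_\Xi$ from sequences of conditions to conditions is a strong FAM limit for intervals if: for every pair $(s^*,l^* )$, every $j^*\in\omega$ and $(s^*,l^* )$-sequences $\bar q^j$ ($j<j^*$), every $\epsilon>0$, $k^*\in\omega$, every finite partition $(B_m)_{m<m^*}$ of $\omega$, and every condition $q$ stronger than all $\lim_\Xi(\bar q^j)$ ($j<j^*$), there are a nonempty finite $u\subseteq\omega\setminus k^*$ and a condition $q'\le q$ such that $\Xi(B_m)-\epsilon<\frac{|u\cap B_m|}{|u|}<\Xi(B_m)+\epsilon$ for all $m<m^*$, and $\frac1{|u|}\sum_{k\in u}\frac{|\{\ell\in I_k:\ q'\le q^j_\ell\}|}{|I_k|}\ge1-l^*-\epsilon$ for all $j<j^*$. *)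

theory Defs
  imports Complex_Main "HOL-Library.Extended_Real"
begin

definition rho_of :: "nat \<Rightarrow> nat \<Rightarrow> nat" where
  "rho_of h L = max L (h + 2)"
definition pi_of :: "nat \<Rightarrow> nat \<Rightarrow> nat" where
  "pi_of h L = ((h + 1)^2 * (rho_of h L)^(h + 1)) ^ ((rho_of h L)^h)"
definition a_of :: "nat \<Rightarrow> nat \<Rightarrow> nat" where
  "a_of h L = (pi_of h L)^(h + 2)"
definition M_of :: "nat \<Rightarrow> nat \<Rightarrow> nat" where
  "M_of h L = (a_of h L)^2"

text \<open>Level h of T* (nodes are lists; s concatenated with l is s @ [l]).\<close>
primrec Tlev :: "nat \<Rightarrow> nat list set" where
  "Tlev 0 = {[]}"
| "Tlev (Suc h) = {s @ [l] | s l. s \<in> Tlev h \<and> l < M_of h (card (Tlev h))}"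

definition Tstar :: "nat list set" where
  "Tstar = (\<Union>h. Tlev h)"

definition rhoT :: "nat \<Rightarrow> nat" where "rhoT h = rho_of h (card (Tlev h))"
definition piT :: "nat \<Rightarrow> nat" where "piT h = pi_of h (card (Tlev h))"
definition aT :: "nat \<Rightarrow> nat" where "aT h = a_of h (card (Tlev h))"
definition MT :: "nat \<Rightarrow> nat" where "MT h = M_of h (card (Tlev h))"

definition Omega :: "nat list \<Rightarrow> nat list set" where
  "Omega s = {s @ [l] | l. l < MT (length s)}"

definition mu_set :: "nat list \<Rightarrow> nat list set \<Rightarrow> ereal" where
  "mu_set s A = (if A = Omega s then \<infinity>
     else ereal (log (real (aT (length s)))
                  (real (MT (length s)) / (real (MT (length s)) - real (card A)))))"

definition mu :: "nat list \<Rightarrow> nat list set \<Rightarrow> ereal" where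
  "mu s p = mu_set s (p \<inter> Omega s)"

definition subtree :: "nat list set \<Rightarrow> bool" where
  "subtree p \<longleftrightarrow> p \<subseteq> Tstar \<and> p \<noteq> {} \<and> (\<forall>s u. s @ u \<in> p \<longrightarrow> s \<in> p)"

definition splitting :: "nat list set \<Rightarrow> nat list \<Rightarrow> bool" where
  "splitting p s \<longleftrightarrow> s \<in> p \<and> card (p \<inter> Omega s) \<ge> 2"

definition is_stem :: "nat list set \<Rightarrow> nat list \<Rightarrow> bool" where
  "is_stem p s \<longleftrightarrow> splitting p s \<and> (\<forall>t. splitting p t \<longrightarrow> length s \<le> length t)"

definition stem :: "nat list set \<Rightarrow> nat list" where
  "stem p = (THE s. is_stem p s)"

text \<open>The bound 1 + 1/h*, where 1/0 is read as infinity (extended reals).\<close>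
definition bound :: "nat \<Rightarrow> ereal" where
  "bound h = (if h = 0 then \<infinity> else 1 + ereal (1 / real h))"

definition in_E :: "nat list set \<Rightarrow> bool" where
  "in_E p \<longleftrightarrow> subtree p \<and>
     (\<exists>s. is_stem p s \<and> (\<forall>t\<in>p. (\<exists>u. t = s @ u) \<longrightarrow> mu t p \<ge> bound (length s)))"

definition loss_set :: "nat list set \<Rightarrow> nat set" where
  "loss_set p = {m. m \<ge> 2 \<and> length (stem p) > 3 * m \<and>
     (\<forall>s\<in>p. length s \<ge> length (stem p) \<longrightarrow> mu s p \<ge> 1 + ereal (1 / real m))}"

definition loss :: "nat list set \<Rightarrow> real option" where
  "loss p = (if loss_set p = {} then None else Some (1 / real (Max (loss_set p))))"

definition FAM :: "(nat set \<Rightarrow> real) \<Rightarrow> bool" where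
  "FAM \<Xi> \<longleftrightarrow> (\<forall>A. \<Xi> A \<ge> 0) \<and> \<Xi> UNIV = 1 \<and>
     (\<forall>A B. A \<inter> B = {} \<longrightarrow> \<Xi> (A \<union> B) = \<Xi> A + \<Xi> B) \<and> (\<forall>n. \<Xi> {n} = 0)"

definition interval_partition :: "(nat \<Rightarrow> nat set) \<Rightarrow> bool" where
  "interval_partition I \<longleftrightarrow>
     (\<exists>b. b 0 = 0 \<and> strict_mono b \<and> (\<forall>k. I k = {b k..<b (Suc k)}))"

definition sl_sequence :: "nat list \<Rightarrow> real \<Rightarrow> (nat \<Rightarrow> nat list set) \<Rightarrow> bool" where
  "sl_sequence s l q \<longleftrightarrow> (\<forall>n. in_E (q n) \<and> stem (q n) = s \<and> loss (q n) = Some l)"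

definition strong_FAM_limit_intervals ::
  "(nat \<Rightarrow> nat set) \<Rightarrow> (nat set \<Rightarrow> real) \<Rightarrow> ((nat \<Rightarrow> nat list set) \<Rightarrow> nat list set) \<Rightarrow> bool" where
  "strong_FAM_limit_intervals I \<Xi> limf \<longleftrightarrow>
    (\<forall>s l (jstar::nat) (qs :: nat \<Rightarrow> nat \<Rightarrow> nat list set) (\<epsilon>::real) (kstar::nat)
       (B :: nat \<Rightarrow> nat set) (mstar::nat) q.
      (\<forall>j<jstar. sl_sequence s l (qs j)) \<and> \<epsilon> > 0 \<and>
      (\<forall>m<mstar. \<forall>m'<mstar. m \<noteq> m' \<longrightarrow> B m \<inter> B m' = {}) \<and> (\<Union>m<mstar. B m) = UNIV \<and>
      in_E q \<and> (\<forall>j<jstar. q \<subseteq> limf (qs j)) \<longrightarrow>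
      (\<exists>u q'. finite u \<and> u \<noteq> {} \<and> u \<inter> {..<kstar} = {} \<and> in_E q' \<and> q' \<subseteq> q \<and>
         (\<forall>m<mstar. \<Xi> (B m) - \<epsilon> < real (card (u \<inter> B m)) / real (card u) \<and>
                    real (card (u \<inter> B m)) / real (card u) < \<Xi> (B m) + \<epsilon>) \<and>
         (\<forall>j<jstar. (1 / real (card u)) *
             (\<Sum>k\<in>u. real (card {n \<in> I k. q' \<subseteq> qs j n}) / real (card (I k)))
           \<ge> 1 - l - \<epsilon>)))"

end

theory Submission
  imports Defs
begin

lemma Tlev_char: "t \<in> Tlev h \<longleftrightarrow> length t = h \<and> (\<forall>j<h. t!j < MT j)"
proof (induction h arbitrary: t)
  case 0 then show ?case by auto
next
  case (Suc h)
  show ?case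
  proof
    assume "t \<in> Tlev (Suc h)"
    then obtain s l where "t = s @ [l]" "s \<in> Tlev h" "l < MT h" by (auto simp: MT_def)
    then show "length t = Suc h \<and> (\<forall>j<Suc h. t!j < MT j)" using Suc.IH
      by (auto simp: nth_append less_Suc_eq)
  next
    assume a: "length t = Suc h \<and> (\<forall>j<Suc h. t!j < MT j)"
    then have "t = butlast t @ [last t]"
      by (metis append_butlast_last_id list.size(3) nat.simps(3))
    moreover have "butlast t \<in> Tlev h" using Suc.IH a by (auto simp: nth_butlast)
    moreover have "last t < MT h" using a by (subst last_conv_nth) auto
    ultimately show "t \<in> Tlev (Suc h)" by (auto simp: MT_def)
  qed
qed

lemma Tstar_char: "t \<in> Tstar \<longleftrightarrow> (\<forall>j<length t. t!j < MT j)"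
  unfolding Tstar_def using Tlev_char by auto

lemma Omega_elem: "x \<in> Omega t \<Longrightarrow> \<exists>l. x = t @ [l] \<and> l < MT (length t)"
  unfolding Omega_def by auto

lemma Omega_Tstar: "t \<in> Tstar \<Longrightarrow> Omega t \<subseteq> Tstar"
  by (auto simp: Omega_def Tstar_char nth_append less_Suc_eq)

lemma Omega_image: "Omega t = (\<lambda>l. t @ [l]) ` {..<MT (length t)}"
  unfolding Omega_def by auto

lemma finite_Omega[simp]: "finite (Omega t)"
  by (simp add: Omega_image)

lemma card_Omega: "card (Omega t) = MT (length t)"
  unfolding Omega_image by (subst card_image) (auto simp: inj_on_def)

lemma rho_ge2: "rho_of h L \<ge> 2"
  unfolding rho_of_def by auto

lemma pi_of_ge: "pi_of h L \<ge> 2^(h+1)"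
proof -
  let ?r = "rho_of h L"
  have r: "?r \<ge> 2" by (rule rho_ge2)
  have b1: "(2::nat)^(h+1) \<le> ?r^(h+1)" by (rule power_mono) (use r in auto)
  have b2: "?r^(h+1) \<le> (h+1)^2 * ?r^(h+1)" by simp
  have e: "?r^h \<ge> 1" using r by simp
  have b3: "(h+1)^2 * ?r^(h+1) \<le> ((h+1)^2 * ?r^(h+1))^(?r^h)"
  proof -
    have "(h+1)^2 * ?r^(h+1) \<ge> 1" using r by simp
    then show ?thesis using e
      by (metis One_nat_def le_antisym less_one nat_less_le nat_power_less_imp_less
          not_less_eq_eq power_one_right self_le_power zero_less_iff_neq_zero)
  qed
  show ?thesis unfolding pi_of_def using b1 b2 b3 by linarith
qed

lemma piT_ge: "piT h \<ge> 2^(h+1)"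
  unfolding piT_def by (rule pi_of_ge)

lemma piT_ge2: "piT h \<ge> 2"
proof -
  have "(2::nat) \<le> 2^(h+1)" by (simp add: self_le_power)
  then show ?thesis using piT_ge[of h] by linarith
qed

lemma aT_eq: "aT h = piT h ^ (h+2)"
  unfolding aT_def piT_def a_of_def by simp

lemma MT_eq: "MT h = aT h ^ 2"
  unfolding aT_def MT_def M_of_def by simp

lemma aT_ge: "aT h \<ge> piT h"
proof -
  have "piT h \<ge> 1" using piT_ge2[of h] by linarith
  then have "piT h ^ 1 \<le> piT h ^ (h+2)" using power_increasing[of 1 "h+2" "piT h"] by auto
  then show ?thesis by (simp add: aT_eq)
qed

lemma aT_ge2: "aT h \<ge> 2"
  using aT_ge[of h] piT_ge2[of h] by linarith

lemma mu_ge_iff: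
  assumes r: "r > 0"
  shows "(1 + ereal (1/r) \<le> mu t p) \<longleftrightarrow>
         real (card (Omega t - p)) \<le> real (aT (length t)) powr (1 - 1/r)"
proof -
  let ?a = "real (aT (length t))" and ?M = "real (MT (length t))"
  let ?A = "p \<inter> Omega t"
  have a2: "?a \<ge> 2" using aT_ge2[of "length t"] by linarith
  have M: "?M = ?a^2" by (simp add: MT_eq)
  have diff: "Omega t - p = Omega t - ?A" by auto
  show ?thesis
  proof (cases "?A = Omega t")
    case True
    then have "Omega t - p = {}" by auto
    moreover have "mu t p = \<infinity>" using True by (simp add: mu_def mu_set_def)
    ultimately show ?thesis using a2 by (metis card.empty of_nat_0 ereal_less_eq(1) powr_ge_zero)
  next
    case False
    have sub: "?A \<subset> Omega t" using False by auto
    then have cA: "card ?A < MT (length t)"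
      using psubset_card_mono[OF finite_Omega sub] card_Omega by simp
    have cD: "card (Omega t - p) = MT (length t) - card ?A"
      unfolding diff by (subst card_Diff_subset) (auto simp: card_Omega)
    define X where "X = ?M - real (card ?A)"
    have X: "X = real (card (Omega t - p))" using cD cA unfolding X_def by simp
    have Xpos: "X > 0" using cA unfolding X_def by simp
    have mu: "mu t p = ereal (log ?a (?M / X))"
      using False by (simp add: mu_def mu_set_def X_def)
    have "(1 + ereal (1/r) \<le> mu t p) \<longleftrightarrow> 1 + 1/r \<le> log ?a (?M / X)"
      unfolding mu by (simp add: one_ereal_def)
    also have "\<dots> \<longleftrightarrow> ?a powr (1 + 1/r) \<le> ?M / X"
      using a2 Xpos M by (subst le_log_iff) auto
    also have "\<dots> \<longleftrightarrow> X * ?a powr (1 + 1/r) \<le> ?M"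
      using Xpos by (simp add: field_simps)
    also have "\<dots> \<longleftrightarrow> X * ?a powr (1 + 1/r) \<le> ?a powr 2 * 1"
      using M a2 by (simp add: powr_numeral)
    also have "\<dots> \<longleftrightarrow> X \<le> ?a powr (1 - 1/r)"
    proof -
      have e: "?a powr 2 = ?a powr (1 + 1/r) * ?a powr (1 - 1/r)"
        by (simp add: powr_add[symmetric])
      have p: "?a powr (1 + 1/r) > 0" using a2 by simp
      show ?thesis unfolding e using p
        by (simp add: mult.commute)
    qed
    finally show ?thesis using X by simp
  qed
qed

lemma bound_le_mu_iff:
  "(bound h \<le> mu t p) \<longleftrightarrow>
     (if h = 0 then Omega t - p = {}
      else real (card (Omega t - p)) \<le> real (aT (length t)) powr (1 - 1/real h))"
proof (cases "h = 0")
  case True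
  have "(\<infinity> \<le> mu t p) \<longleftrightarrow> Omega t - p = {}"
  proof
    assume "\<infinity> \<le> mu t p"
    then have "mu t p = \<infinity>" by simp
    then have "p \<inter> Omega t = Omega t" by (auto simp: mu_def mu_set_def split: if_splits)
    then show "Omega t - p = {}" by auto
  next
    assume "Omega t - p = {}"
    then have "p \<inter> Omega t = Omega t" by auto
    then show "\<infinity> \<le> mu t p" by (simp add: mu_def mu_set_def)
  qed
  then show ?thesis using True by (simp add: bound_def)
next
  case False
  then show ?thesis using mu_ge_iff[of "real h" t p] by (simp add: bound_def)
qed

definition pfx :: "'a list \<Rightarrow> 'a list \<Rightarrow> bool" where
  "pfx s t \<longleftrightarrow> (\<exists>u. t = s @ u)"

lemma pfx_take: "pfx s t \<longleftrightarrow> length s \<le> length t \<and> take (length s) t = s"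
  unfolding pfx_def by (auto) (metis append_take_drop_id)

lemma pfx_refl[simp]: "pfx s s" unfolding pfx_def by auto

lemma pfx_trans: "pfx a b \<Longrightarrow> pfx b c \<Longrightarrow> pfx a c" unfolding pfx_def by auto

lemma pfx_len: "pfx a b \<Longrightarrow> length a \<le> length b" unfolding pfx_def by auto

lemma pfx_antisym: "pfx a b \<Longrightarrow> length b \<le> length a \<Longrightarrow> a = b" unfolding pfx_def by auto

lemma pfx_comparable: "pfx a x \<Longrightarrow> pfx b x \<Longrightarrow> pfx a b \<or> pfx b a"
  unfolding pfx_def by (auto simp: append_eq_append_conv2)

lemma subtree_pfx: "subtree p \<Longrightarrow> x \<in> p \<Longrightarrow> pfx y x \<Longrightarrow> y \<in> p"
  unfolding subtree_def pfx_def by auto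

lemma Omega_pfx: "x \<in> Omega t \<Longrightarrow> pfx t x \<and> length x = Suc (length t)"
  using Omega_elem[of x t] unfolding pfx_def by auto

lemma diff_index:
  "length s = length s' \<Longrightarrow> s \<noteq> s' \<Longrightarrow> \<exists>j<length s. take j s = take j s' \<and> s!j \<noteq> s'!j"
proof (induction s arbitrary: s')
  case Nil then show ?case by auto
next
  case (Cons a s)
  then obtain b s'' where s': "s' = b # s''" by (cases s') auto
  show ?case
  proof (cases "a = b")
    case False then show ?thesis using s' by force
  next
    case True
    then have "s \<noteq> s''" "length s = length s''" using Cons.prems s' by auto
    then obtain j where "j < length s" "take j s = take j s''" "s!j \<noteq> s''!j" using Cons.IH by blast
    then show ?thesis using s' True by (intro exI[of _ "Suc j"]) auto
  qed
qed

lemma take_Suc_Omega: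
  assumes "s \<in> Tstar" "j < length s"
  shows "take (Suc j) s \<in> Omega (take j s)"
proof -
  have "take (Suc j) s = take j s @ [s!j]" using assms(2) by (simp add: take_Suc_conv_app_nth)
  moreover have "s!j < MT j" using assms Tstar_char by auto
  ultimately show ?thesis unfolding Omega_def using assms(2) by auto
qed

lemma stem_unique:
  assumes p: "subtree p" and a: "is_stem p s" and b: "is_stem p s'"
  shows "s = s'"
proof (rule ccontr)
  assume ne: "s \<noteq> s'"
  have len: "length s = length s'" using a b unfolding is_stem_def by (meson le_antisym)
  obtain j where j: "j < length s" "take j s = take j s'" "s!j \<noteq> s'!j"
    using diff_index[OF len ne] by blast
  have sp: "s \<in> p" "s' \<in> p" using a b unfolding is_stem_def splitting_def by auto
  have sT: "s \<in> Tstar" "s' \<in> Tstar" using sp p unfolding subtree_def by auto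
  let ?t0 = "take j s"
  have t0p: "?t0 \<in> p" using subtree_pfx[OF p sp(1)] by (simp add: pfx_def) (metis append_take_drop_id)
  have x1: "take (Suc j) s \<in> p \<inter> Omega ?t0"
    using take_Suc_Omega[OF sT(1) j(1)] subtree_pfx[OF p sp(1), of "take (Suc j) s"]
    by (auto simp: pfx_def) (metis append_take_drop_id)
  have x2: "take (Suc j) s' \<in> p \<inter> Omega ?t0"
    using take_Suc_Omega[OF sT(2)] j len subtree_pfx[OF p sp(2), of "take (Suc j) s'"]
    by (auto simp: pfx_def) (metis append_take_drop_id)
  have x12: "take (Suc j) s \<noteq> take (Suc j) s'"
    using j len by (metis lessI nth_take)
  have "card (p \<inter> Omega ?t0) \<ge> 2"
  proof -
    have "{take (Suc j) s, take (Suc j) s'} \<subseteq> p \<inter> Omega ?t0" using x1 x2 by auto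
    moreover have "finite (p \<inter> Omega ?t0)" by auto
    ultimately have "card {take (Suc j) s, take (Suc j) s'} \<le> card (p \<inter> Omega ?t0)"
      by (rule card_mono[rotated])
    then show ?thesis using x12 by simp
  qed
  then have "splitting p ?t0" using t0p unfolding splitting_def by auto
  then have "length s \<le> length ?t0" using a unfolding is_stem_def by auto
  then show False using j by simp
qed

lemma in_E_stem:
  assumes "in_E p"
  shows "is_stem p (stem p)" "\<forall>t\<in>p. pfx (stem p) t \<longrightarrow> bound (length (stem p)) \<le> mu t p"
proof -
  obtain s where s: "is_stem p s" "\<forall>t\<in>p. (\<exists>u. t = s @ u) \<longrightarrow> mu t p \<ge> bound (length s)"
    using assms unfolding in_E_def by blast
  have st: "subtree p" using assms unfolding in_E_def by auto
  have "stem p = s" unfolding stem_def using stem_unique[OF st] s(1) by blast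
  then show "is_stem p (stem p)" "\<forall>t\<in>p. pfx (stem p) t \<longrightarrow> bound (length (stem p)) \<le> mu t p"
    using s by (auto simp: pfx_def)
qed

lemma powr_le_a:
  assumes "a \<ge> (1::real)" "e \<le> 1"
  shows "a powr e \<le> a"
  using assms powr_mono[of e 1 a] by auto

lemma card_succ_ge2:
  assumes "real (card (Omega t - p)) \<le> real (aT (length t)) powr e" "e \<le> 1"
  shows "card (p \<inter> Omega t) \<ge> 2"
proof -
  let ?a = "aT (length t)"
  have a2: "?a \<ge> 2" by (rule aT_ge2)
  have "real (card (Omega t - p)) \<le> real ?a" using assms powr_le_a[of "real ?a" e] a2 by auto
  then have c: "card (Omega t - p) \<le> ?a" by simp
  have "card (Omega t - p) = card (Omega t) - card (Omega t \<inter> p)"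
    by (rule card_Diff_subset_Int) simp
  moreover have "card (Omega t \<inter> p) \<le> card (Omega t)" by (rule card_mono) auto
  moreover have "Omega t \<inter> p = p \<inter> Omega t" by auto
  ultimately have "card (Omega t) = card (p \<inter> Omega t) + card (Omega t - p)" by simp
  moreover have "card (Omega t) = ?a^2" by (simp add: card_Omega MT_eq)
  moreover have "?a^2 \<ge> ?a + 2"
  proof -
    have "?a * ?a \<ge> 2 * ?a" using a2 by simp
    then show ?thesis using a2 unfolding power2_eq_square by linarith
  qed
  ultimately show ?thesis using c by linarith
qed

lemma stem_from:
  assumes p: "subtree p" and t: "t \<in> p" and comp: "\<forall>x\<in>p. pfx x t \<or> pfx t x"
    and sp: "card (p \<inter> Omega t) \<ge> 2"
  shows "is_stem p t"
  unfolding is_stem_def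
proof (intro conjI allI impI)
  show "splitting p t" using t sp by (simp add: splitting_def)
next
  fix x assume "splitting p x"
  then have x: "x \<in> p" "card (p \<inter> Omega x) \<ge> 2" by (auto simp: splitting_def)
  show "length t \<le> length x"
  proof (rule ccontr)
    assume "\<not> length t \<le> length x"
    then have lt: "length x < length t" by simp
    have px: "pfx x t" using comp x(1) lt pfx_len by fastforce
    have "p \<inter> Omega x \<subseteq> {take (Suc (length x)) t}"
    proof
      fix y assume y: "y \<in> p \<inter> Omega x"
      then have yl: "length y = Suc (length x)" "pfx x y" using Omega_pfx by auto
      have "pfx y t \<or> pfx t y" using comp y by auto
      then have "pfx y t" using yl lt pfx_antisym by (metis Suc_leI)
      then show "y \<in> {take (Suc (length x)) t}" using yl by (simp add: pfx_take)
    qed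
    then have "card (p \<inter> Omega x) \<le> card {take (Suc (length x)) t}" by (intro card_mono) auto
    then have "card (p \<inter> Omega x) \<le> 1" by simp
    then show False using x by simp
  qed
qed

lemma in_E_from:
  assumes p: "subtree p" and t: "t \<in> p" and h: "length t > 0"
    and comp: "\<forall>x\<in>p. pfx x t \<or> pfx t x"
    and nrm: "\<forall>x\<in>p. pfx t x \<longrightarrow>
              real (card (Omega x - p)) \<le> real (aT (length x)) powr (1 - 1/real (length t))"
  shows "in_E p" "stem p = t"
proof -
  have "card (p \<inter> Omega t) \<ge> 2" using nrm t by (intro card_succ_ge2[of t p "1 - 1/real (length t)"]) auto
  then have st: "is_stem p t" using stem_from[OF p t comp] by blast
  have "\<forall>x\<in>p. (\<exists>u. x = t @ u) \<longrightarrow> mu x p \<ge> bound (length t)"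
    using nrm h by (auto simp: bound_le_mu_iff pfx_def)
  then show "in_E p" using p st unfolding in_E_def by blast
  show "stem p = t" unfolding stem_def using stem_unique[OF p] st by blast
qed

context
  fixes \<Xi> :: "nat set \<Rightarrow> real"
  assumes F: "FAM \<Xi>"
begin

lemma F_nonneg: "\<Xi> A \<ge> 0" using F unfolding FAM_def by auto
lemma F_UNIV: "\<Xi> UNIV = 1" using F unfolding FAM_def by auto
lemma F_add: "A \<inter> B = {} \<Longrightarrow> \<Xi> (A \<union> B) = \<Xi> A + \<Xi> B" using F unfolding FAM_def by auto
lemma F_single: "\<Xi> {n} = 0" using F unfolding FAM_def by auto

lemma F_empty: "\<Xi> {} = 0" using F_add[of "{}" "{}"] by simp

lemma F_diff: assumes "B \<subseteq> A" shows "\<Xi> (A - B) = \<Xi> A - \<Xi> B"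
proof -
  have e: "A = B \<union> (A - B)" using assms by auto
  have "\<Xi> (B \<union> (A - B)) = \<Xi> B + \<Xi> (A - B)" by (rule F_add) auto
  then show ?thesis using e by simp
qed

lemma F_mono: "B \<subseteq> A \<Longrightarrow> \<Xi> B \<le> \<Xi> A"
  using F_diff[of B A] F_nonneg[of "A - B"] by linarith

lemma F_le1: "\<Xi> A \<le> 1" using F_mono[of A UNIV] F_UNIV by simp

lemma F_diff_ge: "\<Xi> (A - B) \<ge> \<Xi> A - \<Xi> B"
proof -
  have e: "A - B = A - (A \<inter> B)" by auto
  have "\<Xi> (A - B) = \<Xi> A - \<Xi> (A \<inter> B)" unfolding e by (rule F_diff) auto
  moreover have "\<Xi> (A \<inter> B) \<le> \<Xi> B" by (rule F_mono) auto
  ultimately show ?thesis by linarith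
qed

lemma F_finite: "finite A \<Longrightarrow> \<Xi> A = 0"
proof (induction A rule: finite_induct)
  case empty then show ?case by (rule F_empty)
next
  case (insert x A)
  then have "\<Xi> (insert x A) = \<Xi> {x} + \<Xi> A" using F_add[of "{x}" A] by auto
  then show ?case using insert F_single by simp
qed

lemma F_sum:
  assumes "finite S" "\<forall>i\<in>S. \<forall>j\<in>S. i \<noteq> j \<longrightarrow> X i \<inter> X j = {}"
  shows "\<Xi> (\<Union>i\<in>S. X i) = (\<Sum>i\<in>S. \<Xi> (X i))"
  using assms
proof (induction S rule: finite_induct)
  case empty then show ?case by (simp add: F_empty)
next
  case (insert x S)
  have d: "X x \<inter> (\<Union>i\<in>S. X i) = {}" using insert by auto
  have "\<Xi> (\<Union>i\<in>insert x S. X i) = \<Xi> (X x \<union> (\<Union>i\<in>S. X i))" by simp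
  also have "\<dots> = \<Xi> (X x) + \<Xi> (\<Union>i\<in>S. X i)" using d by (rule F_add)
  also have "\<dots> = \<Xi> (X x) + (\<Sum>i\<in>S. \<Xi> (X i))" using insert by simp
  finally show ?case using insert by simp
qed

definition atom :: "'i set \<Rightarrow> ('i \<Rightarrow> nat set) \<Rightarrow> 'i set \<Rightarrow> nat set" where
  "atom T A P = {k. {t\<in>T. k \<in> A t} = P}"

lemma atom_disj: "P \<noteq> Q \<Longrightarrow> atom T A P \<inter> atom T A Q = {}"
  unfolding atom_def by auto

lemma atom_mem: "k \<in> atom T A {t\<in>T. k \<in> A t}"
  unfolding atom_def by simp

lemma atom_cover: "(\<Union>P\<in>Pow T. atom T A P) = UNIV"
proof (intro set_eqI iffI)
  fix k show "k \<in> (\<Union>P\<in>Pow T. atom T A P)"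
    by (rule UN_I[of "{t\<in>T. k \<in> A t}"]) (auto intro: atom_mem)
qed auto

lemma atom_in: "k \<in> atom T A P \<Longrightarrow> t \<in> T \<Longrightarrow> (k \<in> A t \<longleftrightarrow> t \<in> P)"
  unfolding atom_def by auto

lemma atom_set: assumes "t \<in> T" shows "A t = (\<Union>P\<in>{P\<in>Pow T. t \<in> P}. atom T A P)"
proof (intro set_eqI iffI)
  fix k assume "k \<in> A t"
  then show "k \<in> (\<Union>P\<in>{P\<in>Pow T. t \<in> P}. atom T A P)"
    by (intro UN_I[of "{t\<in>T. k \<in> A t}"]) (auto intro: atom_mem simp: assms)
next
  fix k assume "k \<in> (\<Union>P\<in>{P\<in>Pow T. t \<in> P}. atom T A P)"
  then obtain P where "t \<in> P" "k \<in> atom T A P" by auto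
  then show "k \<in> A t" using atom_in[of k T A P t] assms by auto
qed

lemma atom_sum1: assumes "finite T" shows "(\<Sum>P\<in>Pow T. \<Xi> (atom T A P)) = 1"
proof -
  have "\<Xi> (\<Union>P\<in>Pow T. atom T A P) = (\<Sum>P\<in>Pow T. \<Xi> (atom T A P))"
    by (intro F_sum ballI impI atom_disj) (simp_all add: assms)
  then show ?thesis unfolding atom_cover F_UNIV by simp
qed

lemma atom_sumA: assumes "finite T" "t \<in> T"
  shows "\<Xi> (A t) = (\<Sum>P\<in>{P\<in>Pow T. t \<in> P}. \<Xi> (atom T A P))"
proof -
  have "\<Xi> (\<Union>P\<in>{P\<in>Pow T. t \<in> P}. atom T A P) = (\<Sum>P\<in>{P\<in>Pow T. t \<in> P}. \<Xi> (atom T A P))"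
    by (intro F_sum ballI impI atom_disj) (simp_all add: assms)
  then show ?thesis using atom_set[OF assms(2), of A] by simp
qed

lemma overlap:
  assumes T: "finite T" and K: "\<forall>k. real (card {t\<in>T. k \<in> A t}) \<le> K"
  shows "(\<Sum>t\<in>T. \<Xi> (A t)) \<le> K"
proof -
  have "(\<Sum>t\<in>T. \<Xi> (A t)) = (\<Sum>t\<in>T. \<Sum>P\<in>Pow T. if t \<in> P then \<Xi> (atom T A P) else 0)"
    using atom_sumA[OF T] by (intro sum.cong) (auto simp: sum.inter_filter[symmetric] T)
  also have "\<dots> = (\<Sum>P\<in>Pow T. \<Sum>t\<in>T. if t \<in> P then \<Xi> (atom T A P) else 0)"
    by (rule sum.swap)
  also have "\<dots> = (\<Sum>P\<in>Pow T. real (card P) * \<Xi> (atom T A P))"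
  proof (intro sum.cong refl)
    fix P assume "P \<in> Pow T"
    then have "T \<inter> P = P" by auto
    then show "(\<Sum>t\<in>T. if t \<in> P then \<Xi> (atom T A P) else 0) = real (card P) * \<Xi> (atom T A P)"
      using T by (simp add: sum.If_cases)
  qed
  also have "\<dots> \<le> (\<Sum>P\<in>Pow T. K * \<Xi> (atom T A P))"
  proof (intro sum_mono)
    fix P assume P: "P \<in> Pow T"
    show "real (card P) * \<Xi> (atom T A P) \<le> K * \<Xi> (atom T A P)"
    proof (cases "atom T A P = {}")
      case True then show ?thesis by (simp add: F_empty)
    next
      case False
      then obtain k where "k \<in> atom T A P" by auto
      then have "{t\<in>T. k \<in> A t} = P" unfolding atom_def by auto
      then have "real (card P) \<le> K" using K by metis
      then show ?thesis using F_nonneg by (simp add: mult_right_mono)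
    qed
  qed
  also have "\<dots> = K" using atom_sum1[OF T, of A] by (simp add: sum_distrib_left[symmetric])
  finally show ?thesis .
qed

lemma Xi_pos_infinite: "\<Xi> A > 0 \<Longrightarrow> infinite (A - {..<k})"
proof
  assume a: "\<Xi> A > 0" and f: "finite (A - {..<k})"
  have "A \<subseteq> (A - {..<k}) \<union> {..<k}" by auto
  then have "finite A" using f by (meson finite_Un finite_lessThan finite_subset)
  then show False using a F_finite by simp
qed


lemma approx_upper:
  fixes V U0 N R x :: real
  assumes "V \<le> N * x" "N - R \<le> U0" "U0 \<le> N" "0 < N - R" "0 \<le> x" "x \<le> 1" "0 \<le> R"
  shows "V / U0 \<le> x + R / (N - R)"
proof -
  have U0: "U0 > 0" using assms by linarith
  have "R * U0 / (N - R) \<ge> R"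
  proof -
    have "R * U0 \<ge> R * (N - R)" using assms by (simp add: mult_left_mono)
    then show ?thesis using assms(4) by (simp add: field_simps)
  qed
  moreover have "R \<ge> x * (N - U0)"
  proof -
    have "x * (N - U0) \<le> N - U0" using assms by (simp add: mult_left_le_one_le)
    then show ?thesis using assms by linarith
  qed
  ultimately have "N * x \<le> x * U0 + R * U0 / (N - R)" by (simp add: algebra_simps)
  then have "V \<le> (x + R / (N - R)) * U0" using assms(1) by (simp add: algebra_simps)
  then show ?thesis using U0 by (simp add: divide_le_eq)
qed

lemma approx_lower:
  fixes V U0 N R x :: real
  assumes "V \<ge> N * x - R" "U0 \<le> N" "0 < U0" "0 \<le> V"
  shows "V / U0 \<ge> x - R / N"
proof -
  have N: "N > 0" using assms by linarith
  have "V / N \<le> V / U0" using assms by (intro divide_left_mono) auto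
  moreover have "x - R / N \<le> V / N"
  proof -
    have "x - R / N = (N * x - R) / N" using N by (simp add: field_simps)
    also have "\<dots> \<le> V / N" using assms N by (intro divide_right_mono) auto
    finally show ?thesis .
  qed
  ultimately show ?thesis by linarith
qed

lemma approx:
  fixes X :: "nat \<Rightarrow> nat set" and p kstar :: nat and \<epsilon> :: real
  assumes eps: "\<epsilon> > 0"
  shows "\<exists>u. finite u \<and> u \<noteq> {} \<and> u \<inter> {..<kstar} = {} \<and>
            (\<forall>i<p. \<bar>real (card (u \<inter> X i)) / real (card u) - \<Xi> (X i)\<bar> < \<epsilon>)"
proof -
  define T where "T = {..<p}"
  have fT: "finite T" unfolding T_def by simp
  define C where "C = atom T X"
  define R where "R = real (card (Pow T))"
  have R1: "R \<ge> 1" unfolding R_def using fT by (simp add: card_Pow)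
  obtain N :: nat where N: "real N \<ge> 2 * R / \<epsilon> + 2 * R + 1"
    by (meson real_arch_simple)
  have NR: "real N - R \<ge> 2 * R / \<epsilon> + R + 1" using N by linarith
  have eR: "2 * R / \<epsilon> > 0" using eps R1 by simp
  define n where "n P = nat \<lfloor>\<Xi> (C P) * real N\<rfloor>" for P
  have n_up: "real (n P) \<le> \<Xi> (C P) * real N" for P
    unfolding n_def by (rule of_nat_floor) (simp add: F_nonneg)
  have n_lo: "real (n P) \<ge> \<Xi> (C P) * real N - 1" for P
  proof -
    have "\<lfloor>\<Xi> (C P) * real N\<rfloor> \<ge> 0" by (simp add: F_nonneg)
    then have "real (n P) = real_of_int \<lfloor>\<Xi> (C P) * real N\<rfloor>" unfolding n_def by simp
    then show ?thesis using real_of_int_floor_gt_diff_one[of "\<Xi> (C P) * real N"] by linarith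
  qed
  have "\<forall>P. \<exists>U. U \<subseteq> C P - {..<kstar} \<and> finite U \<and> card U = n P"
  proof
    fix P
    show "\<exists>U. U \<subseteq> C P - {..<kstar} \<and> finite U \<and> card U = n P"
    proof (cases "\<Xi> (C P) > 0")
      case True
      then have "infinite (C P - {..<kstar})" by (rule Xi_pos_infinite)
      then show ?thesis using infinite_arbitrarily_large by blast
    next
      case False
      then have "\<Xi> (C P) = 0" using F_nonneg[of "C P"] by linarith
      then have "n P = 0" unfolding n_def by simp
      then show ?thesis by (intro exI[of _ "{}"]) auto
    qed
  qed
  then obtain U where U: "\<And>P. U P \<subseteq> C P - {..<kstar}" "\<And>P. finite (U P)" "\<And>P. card (U P) = n P"
    by metis
  define u where "u = (\<Union>P\<in>Pow T. U P)"
  have disj: "\<forall>P\<in>S. \<forall>Q\<in>S. P \<noteq> Q \<longrightarrow> U P \<inter> U Q = {}" for S :: "nat set set"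
  proof (intro ballI impI)
    fix P Q :: "nat set" assume "P \<noteq> Q"
    then have "C P \<inter> C Q = {}" unfolding C_def by (rule atom_disj)
    then show "U P \<inter> U Q = {}" using U(1)[of P] U(1)[of Q] by blast
  qed
  have fu: "finite u" unfolding u_def using fT U(2) by auto
  have cu: "card u = (\<Sum>P\<in>Pow T. n P)"
    unfolding u_def by (subst card_UN_disjoint[OF _ _ disj]) (simp_all add: U(3) fT U(2))
  have sum_bounds: "real N * (\<Sum>P\<in>S. \<Xi> (C P)) - R \<le> (\<Sum>P\<in>S. real (n P)) \<and>
                    (\<Sum>P\<in>S. real (n P)) \<le> real N * (\<Sum>P\<in>S. \<Xi> (C P))" if S: "S \<subseteq> Pow T" for S
  proof -
    have fS: "finite S" using S fT finite_subset by (metis finite_Pow_iff)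
    have cS: "real (card S) \<le> R" unfolding R_def using S fT by (simp add: card_mono)
    have "(\<Sum>P\<in>S. real (n P)) \<le> (\<Sum>P\<in>S. \<Xi> (C P) * real N)" by (intro sum_mono n_up)
    moreover have "(\<Sum>P\<in>S. \<Xi> (C P) * real N - 1) \<le> (\<Sum>P\<in>S. real (n P))" by (intro sum_mono n_lo)
    moreover have "(\<Sum>P\<in>S. \<Xi> (C P) * real N - 1) = real N * (\<Sum>P\<in>S. \<Xi> (C P)) - real (card S)"
      by (simp add: sum_subtractf sum_distrib_left mult.commute)
    moreover have "(\<Sum>P\<in>S. \<Xi> (C P) * real N) = real N * (\<Sum>P\<in>S. \<Xi> (C P))"
      by (simp add: sum_distrib_left mult.commute)
    ultimately show ?thesis using cS by linarith
  qed
  define U0 where "U0 = real (card u)"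
  have U0eq: "U0 = (\<Sum>P\<in>Pow T. real (n P))" unfolding U0_def cu by simp
  have s1: "(\<Sum>P\<in>Pow T. \<Xi> (C P)) = 1" unfolding C_def by (rule atom_sum1[OF fT])
  have U0b: "real N - R \<le> U0" "U0 \<le> real N" using sum_bounds[of "Pow T"] s1 U0eq by auto
  have U0pos: "U0 > 0" using U0b NR eR by linarith
  then have une: "u \<noteq> {}" unfolding U0_def by auto
  have udisj: "u \<inter> {..<kstar} = {}" unfolding u_def using U(1) by blast
  have main: "\<bar>real (card (u \<inter> X i)) / real (card u) - \<Xi> (X i)\<bar> < \<epsilon>" if i: "i < p" for i
  proof -
    have iT: "i \<in> T" unfolding T_def using i by simp
    let ?S = "{P\<in>Pow T. i \<in> P}"
    have uX: "u \<inter> X i = (\<Union>P\<in>?S. U P)"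
    proof (intro set_eqI iffI)
      fix k assume "k \<in> u \<inter> X i"
      then obtain P where P: "P \<in> Pow T" "k \<in> U P" "k \<in> X i" unfolding u_def by auto
      then have "k \<in> C P" using U(1) by blast
      then have "i \<in> P" using atom_in[of k T X P i] iT P(3) unfolding C_def by auto
      then show "k \<in> (\<Union>P\<in>?S. U P)" using P by auto
    next
      fix k assume "k \<in> (\<Union>P\<in>?S. U P)"
      then obtain P where P: "P \<in> Pow T" "i \<in> P" "k \<in> U P" by auto
      then have "k \<in> C P" using U(1) by blast
      then have "k \<in> X i" using atom_in[of k T X P i] iT P(2) unfolding C_def by auto
      then show "k \<in> u \<inter> X i" using P unfolding u_def by auto
    qed
    have cuX: "card (u \<inter> X i) = (\<Sum>P\<in>?S. n P)"
      unfolding uX by (subst card_UN_disjoint[OF _ _ disj]) (simp_all add: U(3) fT U(2))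
    define V where "V = real (card (u \<inter> X i))"
    have Veq: "V = (\<Sum>P\<in>?S. real (n P))" unfolding V_def cuX by simp
    have sA: "\<Xi> (X i) = (\<Sum>P\<in>?S. \<Xi> (C P))" unfolding C_def by (rule atom_sumA[OF fT iT])
    have Vb: "real N * \<Xi> (X i) - R \<le> V" "V \<le> real N * \<Xi> (X i)"
      using sum_bounds[of ?S] Veq sA by auto
    have x: "0 \<le> \<Xi> (X i)" "\<Xi> (X i) \<le> 1" by (simp_all add: F_nonneg F_le1)
    have up: "V / U0 \<le> \<Xi> (X i) + R / (real N - R)"
      by (rule approx_upper) (use Vb U0b NR eR x R1 in auto)
    have lo: "V / U0 \<ge> \<Xi> (X i) - R / real N"
      by (rule approx_lower) (use Vb U0b U0pos V_def in auto)
    have e1: "R / (real N - R) < \<epsilon>"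
    proof -
      have "2 * R / \<epsilon> = 2 * (R / \<epsilon>)" by simp
      then have "real N - R > R / \<epsilon>" using NR eR R1 by linarith
      then have "R < \<epsilon> * (real N - R)" using eps by (simp add: field_simps)
      then show ?thesis using NR eR by (simp add: field_simps)
    qed
    have e2: "R / real N < \<epsilon>"
    proof -
      have "2 * R / \<epsilon> = 2 * (R / \<epsilon>)" by simp
      then have "real N > R / \<epsilon>" using N eR R1 by linarith
      then have "R < \<epsilon> * real N" using eps by (simp add: field_simps)
      moreover have "real N > 0" using N eR R1 by linarith
      ultimately show ?thesis by (simp add: pos_divide_less_eq mult.commute)
    qed
    show ?thesis using up lo e1 e2 unfolding V_def U0_def by linarith
  qed
  show ?thesis using fu une udisj main by blast
qed

end

definition Dsum :: "nat \<Rightarrow> nat \<Rightarrow> real" where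
  "Dsum h0 h = (\<Sum>i\<in>{h0..<h}. 1 / real (piT i))"

lemma geom_sum: "(\<Sum>i\<in>{h0..<h0+d}. c / 2^(i+1)) = c / 2^h0 - c / 2^(h0+d)" for c :: real
proof (induction d)
  case 0 then show ?case by simp
next
  case (Suc d)
  have "(\<Sum>i\<in>{h0..<h0+Suc d}. c / 2^(i+1)) = (\<Sum>i\<in>{h0..<h0+d}. c / 2^(i+1)) + c / 2^(h0+d+1)"
    by simp
  also have "\<dots> = c / 2^h0 - c / 2^(h0+d) + c / 2^(h0+d+1)" using Suc by simp
  also have "\<dots> = c / 2^h0 - c / 2^(h0 + Suc d)" by (simp add: field_simps)
  finally show ?case .
qed

lemma geom_le: "c \<ge> 0 \<Longrightarrow> (\<Sum>i\<in>{h0..<h}. c / 2^(i+1)) \<le> c / 2^h0" for c :: real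
proof (cases "h \<le> h0")
  case True
  assume "c \<ge> 0"
  then show ?thesis using True by simp
next
  case False
  assume c: "c \<ge> 0"
  then obtain d where "h = h0 + d" using False by (metis le_add_diff_inverse nle_le)
  then show ?thesis using geom_sum[of c h0 d] c by simp
qed

lemma inv_piT_le: "1 / real (piT i) \<le> 1 / 2^(i+1)"
proof -
  have "real (2^(i+1)) \<le> real (piT i)" using piT_ge[of i] by linarith
  then show ?thesis by (simp add: frac_le)
qed

lemma Dsum_le: "Dsum h0 h \<le> 1 / 2^h0"
proof -
  have "Dsum h0 h \<le> (\<Sum>i\<in>{h0..<h}. 1 / 2^(i+1))"
    unfolding Dsum_def by (intro sum_mono inv_piT_le)
  also have "\<dots> \<le> 1 / 2^h0" using geom_le[of 1 h0 h] by simp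
  finally show ?thesis .
qed

lemma Dsum_nonneg: "Dsum h0 h \<ge> 0" unfolding Dsum_def by (simp add: sum_nonneg)

lemma Dsum_Suc: "h0 \<le> h \<Longrightarrow> Dsum h0 (Suc h) = Dsum h0 h + 1 / real (piT h)"
  unfolding Dsum_def by simp

lemma two_pow_ge: "2^n \<ge> n + (1::nat)"
  by (induction n) auto

lemma Dsum_small: assumes "3 * m < h0" "m \<ge> 1" shows "Dsum h0 h \<le> 1 / (2 * real m)"
proof -
  have "(2::nat)^h0 \<ge> h0 + 1" by (rule two_pow_ge)
  then have "real (2^h0) \<ge> 2 * real m" using assms by linarith
  then have "1 / (2::real)^h0 \<le> 1 / (2 * real m)" using assms by (simp add: frac_le)
  then show ?thesis using Dsum_le[of h0 h] by linarith
qed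

lemma aT_powr: "real (aT h) powr x = real (piT h) powr (real (h+2) * x)"
proof -
  have p: "real (piT h) > 0" using piT_ge2[of h] by simp
  have "real (aT h) = real (piT h) powr real (h+2)"
    unfolding aT_eq using p by (subst powr_realpow) simp_all
  then show ?thesis using p by (simp add: powr_powr)
qed

lemma LIM_exponent:
  assumes m: "m \<ge> 2" and hs: "3 * m < hs" and h: "hs \<le> h"
  shows "real (aT h) powr (1 - 1/real m) * real (piT h)^2 \<le> real (aT h) powr (1 - 1/real hs)"
proof -
  let ?p = "real (piT h)"
  have p2: "?p \<ge> 2" using piT_ge2[of h] by simp
  have e: "2 + real (h+2) * (1 - 1/real m) \<le> real (h+2) * (1 - 1/real hs)"
  proof -
    have "1 / real hs \<le> 1 / (3 * real m)" using hs m by (simp add: frac_le)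
    then have "1/real m - 1/real hs \<ge> 1/real m - 1/(3 * real m)" by linarith
    also have "1/real m - 1/(3 * real m) = 2 / (3 * real m)" using m by (simp add: field_simps)
    finally have d: "1/real m - 1/real hs \<ge> 2 / (3 * real m)" .
    have "real (h+2) \<ge> 3 * real m" using hs h by simp
    then have "real (h+2) * (2 / (3 * real m)) \<ge> 3 * real m * (2 / (3 * real m))"
      by (intro mult_right_mono) auto
    also have "3 * real m * (2 / (3 * real m)) = 2" using m by simp
    finally have "real (h+2) * (2 / (3 * real m)) \<ge> 2" .
    moreover have "real (h+2) * (1/real m - 1/real hs) \<ge> real (h+2) * (2 / (3 * real m))"
      using d by (intro mult_left_mono) auto
    ultimately have "real (h+2) * (1/real m - 1/real hs) \<ge> 2" by linarith
    then show ?thesis by (simp add: algebra_simps)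
  qed
  have sq: "?p^2 = ?p powr 2" using p2 by (simp add: powr_numeral)
  have "real (aT h) powr (1 - 1/real m) * ?p^2 = ?p powr (real (h+2) * (1 - 1/real m)) * ?p powr 2"
    unfolding aT_powr sq ..
  also have "\<dots> = ?p powr (2 + real (h+2) * (1 - 1/real m))"
    by (simp only: powr_add[symmetric] add.commute)
  also have "\<dots> \<le> ?p powr (real (h+2) * (1 - 1/real hs))"
    using e p2 by (intro powr_mono) auto
  also have "\<dots> = real (aT h) powr (1 - 1/real hs)" unfolding aT_powr ..
  finally show ?thesis .
qed

section \<open>Counting lemma\<close>

lemma card_filter_sum: "finite F \<Longrightarrow> real (card {n\<in>F. P n}) = (\<Sum>n\<in>F. if P n then 1 else 0)"
  by (simp add: sum.inter_filter[symmetric])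

definition fr :: "(nat \<Rightarrow> nat set) \<Rightarrow> (nat \<Rightarrow> nat list set) \<Rightarrow> nat list \<Rightarrow> nat \<Rightarrow> real" where
  "fr I qs t k = real (card {n \<in> I k. t \<in> qs n}) / real (card (I k))"

lemma count_lemma:
  fixes F :: "nat set" and Q :: "nat \<Rightarrow> nat list set"
  assumes F: "finite F" "card F > 0"
    and miss: "\<And>n. n \<in> F \<Longrightarrow> t \<in> Q n \<Longrightarrow> real (card (Omega t - Q n)) \<le> c"
    and cl: "\<And>n x. x \<in> Omega t \<Longrightarrow> x \<in> Q n \<Longrightarrow> t \<in> Q n"
    and c: "c \<ge> 0"
  shows "(\<Sum>x\<in>Omega t. real (card {n\<in>F. t \<in> Q n}) / real (card F) - real (card {n\<in>F. x \<in> Q n}) / real (card F)) \<le> c"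
    and "\<And>x. x \<in> Omega t \<Longrightarrow> real (card {n\<in>F. x \<in> Q n}) \<le> real (card {n\<in>F. t \<in> Q n})"
proof -
  have diff: "real (card {n\<in>F. t \<in> Q n}) - real (card {n\<in>F. x \<in> Q n}) =
              (\<Sum>n\<in>F. if t \<in> Q n \<and> x \<notin> Q n then 1 else 0)" if x: "x \<in> Omega t" for x
  proof -
    have "(\<Sum>n\<in>F. if t \<in> Q n then 1 else 0) = (\<Sum>n\<in>F. (if x \<in> Q n then 1 else 0) + (if t \<in> Q n \<and> x \<notin> Q n then 1 else (0::real)))"
      using cl[OF x] by (intro sum.cong) auto
    then show ?thesis using F by (simp add: card_filter_sum sum.distrib)
  qed
  show "\<And>x. x \<in> Omega t \<Longrightarrow> real (card {n\<in>F. x \<in> Q n}) \<le> real (card {n\<in>F. t \<in> Q n})"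
  proof -
    fix x assume x: "x \<in> Omega t"
    have "(\<Sum>n\<in>F. if t \<in> Q n \<and> x \<notin> Q n then 1 else (0::real)) \<ge> 0" by (intro sum_nonneg) auto
    then show "real (card {n\<in>F. x \<in> Q n}) \<le> real (card {n\<in>F. t \<in> Q n})" using diff[OF x] by linarith
  qed
  have "(\<Sum>x\<in>Omega t. real (card {n\<in>F. t \<in> Q n}) / real (card F) - real (card {n\<in>F. x \<in> Q n}) / real (card F))
      = (\<Sum>x\<in>Omega t. (\<Sum>n\<in>F. if t \<in> Q n \<and> x \<notin> Q n then 1 else 0) / real (card F))"
    using diff by (intro sum.cong) (auto simp: diff_divide_distrib[symmetric])
  also have "\<dots> = (\<Sum>x\<in>Omega t. \<Sum>n\<in>F. if t \<in> Q n \<and> x \<notin> Q n then 1 else 0) / real (card F)"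
    by (simp add: sum_divide_distrib)
  also have "(\<Sum>x\<in>Omega t. \<Sum>n\<in>F. if t \<in> Q n \<and> x \<notin> Q n then 1 else (0::real))
      = (\<Sum>n\<in>F. \<Sum>x\<in>Omega t. if t \<in> Q n \<and> x \<notin> Q n then 1 else 0)" by (rule sum.swap)
  also have "\<dots> = (\<Sum>n\<in>F. if t \<in> Q n then real (card (Omega t - Q n)) else 0)"
  proof (intro sum.cong refl)
    fix n assume "n \<in> F"
    have "real (card {x\<in>Omega t. x \<notin> Q n}) = (\<Sum>x\<in>Omega t. if x \<notin> Q n then 1 else 0)"
      by (rule card_filter_sum) simp
    moreover have "{x\<in>Omega t. x \<notin> Q n} = Omega t - Q n" by auto
    ultimately show "(\<Sum>x\<in>Omega t. if t \<in> Q n \<and> x \<notin> Q n then 1 else (0::real)) =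
        (if t \<in> Q n then real (card (Omega t - Q n)) else 0)" by auto
  qed
  also have "\<dots> \<le> (\<Sum>n\<in>F. c)" using miss c by (intro sum_mono) auto
  also have "\<dots> = real (card F) * c" by simp
  finally have "(\<Sum>x\<in>Omega t. real (card {n\<in>F. t \<in> Q n}) / real (card F) - real (card {n\<in>F. x \<in> Q n}) / real (card F)) \<le> real (card F) * c / real (card F)"
    by (simp add: divide_right_mono F)
  then show "(\<Sum>x\<in>Omega t. real (card {n\<in>F. t \<in> Q n}) / real (card F) - real (card {n\<in>F. x \<in> Q n}) / real (card F)) \<le> c"
  proof -
    assume a: "(\<Sum>x\<in>Omega t. real (card {n\<in>F. t \<in> Q n}) / real (card F) - real (card {n\<in>F. x \<in> Q n}) / real (card F)) \<le> real (card F) * c / real (card F)"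
    have "real (card F) * c / real (card F) = c" using F by (simp add: card_gt_0_iff)
    then show ?thesis using a by linarith
  qed
qed

lemma Tstar_pfx: assumes "x \<in> Tstar" "pfx y x" shows "y \<in> Tstar"
proof -
  obtain u where x: "x = y @ u" using assms(2) unfolding pfx_def by auto
  show ?thesis unfolding Tstar_char
  proof (intro allI impI)
    fix j assume j: "j < length y"
    then have "x ! j = y ! j" unfolding x by (simp add: nth_append)
    moreover have "j < length x" using j x by simp
    ultimately show "y ! j < MT j" using assms(1) unfolding Tstar_char by metis
  qed
qed

lemma pfx_Omega: "y \<in> Omega x \<Longrightarrow> pfx t0 y \<Longrightarrow> t0 = y \<or> pfx t0 x"
proof -
  assume y: "y \<in> Omega x" and t: "pfx t0 y"
  obtain l where yl: "y = x @ [l]" using Omega_elem[OF y] by auto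
  have "pfx x y" using yl by (simp add: pfx_def)
  then have "pfx t0 x \<or> pfx x t0" using pfx_comparable[OF t] by auto
  then show ?thesis
  proof
    assume "pfx x t0"
    then have "length t0 \<ge> length x" by (rule pfx_len)
    moreover have "length t0 \<le> length y" using t by (rule pfx_len)
    ultimately have "length t0 = length x \<or> length t0 = length y" using yl by auto
    then show ?thesis
    proof
      assume "length t0 = length x"
      then have "x = t0" using pfx_antisym[OF \<open>pfx x t0\<close>] by simp
      then show ?thesis by simp
    next
      assume "length t0 = length y"
      then have "t0 = y" using pfx_antisym[OF t] by simp
      then show ?thesis by simp
    qed
  qed auto
qed

lemma loss_set_finite: "finite (loss_set p)"
proof -
  have "loss_set p \<subseteq> {..<length (stem p)}" unfolding loss_set_def by auto
  then show ?thesis using finite_subset by blast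
qed

lemma loss_facts:
  assumes "loss p = Some l"
  shows "Max (loss_set p) \<in> loss_set p" "l = 1 / real (Max (loss_set p))"
proof -
  have ne: "loss_set p \<noteq> {}" using assms unfolding loss_def by (auto split: if_splits)
  then show "Max (loss_set p) \<in> loss_set p" using loss_set_finite by (rule Max_in[rotated])
  show "l = 1 / real (Max (loss_set p))" using assms ne unfolding loss_def by auto
qed

lemma sl_facts:
  assumes sl: "sl_sequence s l qs"
  shows "\<exists>m. m \<ge> 2 \<and> 3*m < length s \<and> l = 1/real m \<and>
     (\<forall>n. in_E (qs n) \<and> stem (qs n) = s \<and> subtree (qs n) \<and> s \<in> qs n) \<and>
     (\<forall>n t. t \<in> qs n \<longrightarrow> length s \<le> length t \<longrightarrow>
        real (card (Omega t - qs n)) \<le> real (aT (length t)) powr (1 - 1/real m))"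
proof -
  have q: "in_E (qs n)" "stem (qs n) = s" "loss (qs n) = Some l" for n
    using sl unfolding sl_sequence_def by auto
  define m where "m = Max (loss_set (qs 0))"
  have m0: "m \<in> loss_set (qs 0)" "l = 1/real m" using loss_facts[OF q(3)[of 0]] m_def by auto
  then have m2: "m \<ge> 2" "3*m < length s" using q(2)[of 0] unfolding loss_set_def by auto
  have mn: "m \<in> loss_set (qs n)" for n
  proof -
    have a: "Max (loss_set (qs n)) \<in> loss_set (qs n)" "l = 1 / real (Max (loss_set (qs n)))"
      using loss_facts[OF q(3)[of n]] by auto
    then have "Max (loss_set (qs n)) \<ge> 2" unfolding loss_set_def by auto
    then have "Max (loss_set (qs n)) = m" using a(2) m0(2) m2 by (simp add: field_simps)
    then show ?thesis using a(1) by simp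
  qed
  have st: "subtree (qs n)" "s \<in> qs n" for n
  proof -
    show "subtree (qs n)" using q(1) unfolding in_E_def by auto
    have "is_stem (qs n) s" using in_E_stem(1)[OF q(1)[of n]] q(2) by simp
    then show "s \<in> qs n" unfolding is_stem_def splitting_def by auto
  qed
  have nrm: "real (card (Omega t - qs n)) \<le> real (aT (length t)) powr (1 - 1/real m)"
    if "t \<in> qs n" "length s \<le> length t" for n t
  proof -
    have "1 + ereal (1 / real m) \<le> mu t (qs n)" using mn[of n] that q(2)[of n] unfolding loss_set_def by auto
    then show ?thesis using mu_ge_iff[of "real m" t "qs n"] m2 by auto
  qed
  show ?thesis using m2 m0 q st nrm by blast
qed

definition limcond :: "(nat \<Rightarrow> nat set) \<Rightarrow> (nat set \<Rightarrow> real) \<Rightarrow> (nat \<Rightarrow> nat list set) \<Rightarrow> nat \<Rightarrow> nat list \<Rightarrow> bool" where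
  "limcond I \<Xi> qs h0 t0 \<longleftrightarrow> \<Xi> {k. fr I qs t0 k \<ge> 1 - Dsum h0 (length t0)} \<ge> 1 - Dsum h0 (length t0)"

definition LIMT :: "(nat \<Rightarrow> nat set) \<Rightarrow> (nat set \<Rightarrow> real) \<Rightarrow> (nat \<Rightarrow> nat list set) \<Rightarrow> nat list set" where
  "LIMT I \<Xi> qs = {t \<in> Tstar. pfx t (stem (qs 0)) \<or> (pfx (stem (qs 0)) t \<and>
      (\<forall>t0. pfx (stem (qs 0)) t0 \<and> pfx t0 t \<longrightarrow> limcond I \<Xi> qs (length (stem (qs 0))) t0))}"

context
  fixes I :: "nat \<Rightarrow> nat set" and \<Xi> :: "nat set \<Rightarrow> real" and qs :: "nat \<Rightarrow> nat list set"
    and s :: "nat list" and l :: real and m :: nat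
  assumes F: "FAM \<Xi>" and Ifin: "\<And>k. finite (I k)" and Ipos: "\<And>k. card (I k) > 0"
    and sl: "sl_sequence s l qs"
    and m: "m \<ge> 2" "3*m < length s" "l = 1/real m"
    and q: "\<And>n. in_E (qs n) \<and> stem (qs n) = s \<and> subtree (qs n) \<and> s \<in> qs n"
    and qn: "\<And>n t. t \<in> qs n \<Longrightarrow> length s \<le> length t \<Longrightarrow>
        real (card (Omega t - qs n)) \<le> real (aT (length t)) powr (1 - 1/real m)"
begin

lemma LIMT_eq: "LIMT I \<Xi> qs = {t \<in> Tstar. pfx t s \<or> (pfx s t \<and>
      (\<forall>t0. pfx s t0 \<and> pfx t0 t \<longrightarrow> limcond I \<Xi> qs (length s) t0))}"
  unfolding LIMT_def using q[of 0] by simp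

lemma cond_s: "limcond I \<Xi> qs (length s) s"
proof -
  have "fr I qs s k = 1" for k
  proof -
    have "{n \<in> I k. s \<in> qs n} = I k" using q by auto
    then show ?thesis unfolding fr_def using Ipos[of k] by simp
  qed
  then have "{k. fr I qs s k \<ge> 1 - Dsum (length s) (length s)} = UNIV" by (simp add: Dsum_def)
  then show ?thesis unfolding limcond_def using F_UNIV[OF F] by (simp add: Dsum_def)
qed

lemma LIMT_cond: "x \<in> LIMT I \<Xi> qs \<Longrightarrow> pfx s x \<Longrightarrow> pfx s t0 \<Longrightarrow> pfx t0 x \<Longrightarrow> limcond I \<Xi> qs (length s) t0"
proof -
  assume x: "x \<in> LIMT I \<Xi> qs" and a: "pfx s x" "pfx s t0" "pfx t0 x"
  show ?thesis
  proof (cases "pfx x s")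
    case True
    then have "x = s" using a(1) pfx_antisym pfx_len by blast
    then have "t0 = s" using a pfx_antisym pfx_len by blast
    then show ?thesis using cond_s by simp
  next
    case False
    then show ?thesis using x a unfolding LIMT_eq by auto
  qed
qed

lemma s_Tstar: "s \<in> Tstar" using q[of 0] unfolding subtree_def by auto

lemma LIMT_subtree: "subtree (LIMT I \<Xi> qs)"
  unfolding subtree_def
proof (intro conjI allI impI)
  show "LIMT I \<Xi> qs \<subseteq> Tstar" unfolding LIMT_eq by auto
  have "[] \<in> LIMT I \<Xi> qs" unfolding LIMT_eq using Tstar_pfx[OF s_Tstar, of "[]"]
    by (auto simp: pfx_def)
  then show "LIMT I \<Xi> qs \<noteq> {}" by auto
next
  fix y u assume yu: "y @ u \<in> LIMT I \<Xi> qs"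
  let ?x = "y @ u"
  have py: "pfx y ?x" by (simp add: pfx_def)
  have yT: "y \<in> Tstar" using yu Tstar_pfx py unfolding LIMT_eq by auto
  show "y \<in> LIMT I \<Xi> qs"
  proof (cases "pfx ?x s")
    case True
    then show ?thesis using yT pfx_trans[OF py True] unfolding LIMT_eq by auto
  next
    case False
    then have xs: "pfx s ?x" using yu unfolding LIMT_eq by auto
    have "pfx y s \<or> pfx s y" using pfx_comparable[OF py xs] .
    then show ?thesis
    proof
      assume "pfx y s" then show ?thesis using yT unfolding LIMT_eq by auto
    next
      assume sy: "pfx s y"
      have "\<forall>t0. pfx s t0 \<and> pfx t0 y \<longrightarrow> limcond I \<Xi> qs (length s) t0"
        using LIMT_cond[OF yu xs] pfx_trans[OF _ py] by blast
      then show ?thesis using yT sy unfolding LIMT_eq by auto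
    qed
  qed
qed

lemma fr_mono: "y \<in> Omega x \<Longrightarrow> fr I qs y k \<le> fr I qs x k"
proof -
  assume y: "y \<in> Omega x"
  have "{n\<in>I k. y \<in> qs n} \<subseteq> {n\<in>I k. x \<in> qs n}"
  proof
    fix n assume "n \<in> {n\<in>I k. y \<in> qs n}"
    then have "n \<in> I k" "y \<in> qs n" by auto
    moreover have "pfx x y" using Omega_pfx[OF y] by simp
    ultimately show "n \<in> {n\<in>I k. x \<in> qs n}" using subtree_pfx[of "qs n" y x] q[of n] by auto
  qed
  then have "card {n\<in>I k. y \<in> qs n} \<le> card {n\<in>I k. x \<in> qs n}"
    by (intro card_mono) (auto simp: Ifin)
  then show ?thesis unfolding fr_def by (intro divide_right_mono) auto
qed


lemma LIMT_norm:
  assumes x: "x \<in> LIMT I \<Xi> qs" and sx: "pfx s x"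
  shows "real (card (Omega x - LIMT I \<Xi> qs)) \<le> real (aT (length x)) powr (1 - 1/real (length s))"
proof -
  define h where "h = length x"
  define h0 where "h0 = length s"
  have hh: "h0 \<le> h" using pfx_len[OF sx] unfolding h_def h0_def .
  define D where "D = Dsum h0 h"
  define \<delta> where "\<delta> = 1 / real (piT h)"
  define c where "c = real (aT h) powr (1 - 1/real m)"
  define E where "E = {k. fr I qs x k \<ge> 1 - D}"
  have xT: "x \<in> Tstar" using x unfolding LIMT_eq by auto
  have condx: "\<Xi> E \<ge> 1 - D" using LIMT_cond[OF x sx sx pfx_refl]
    unfolding limcond_def E_def D_def h_def h0_def by simp
  define Bad where "Bad = Omega x - LIMT I \<Xi> qs"
  define bad where "bad y = {k\<in>E. fr I qs y k < 1 - D - \<delta>}" for y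
  have dpos: "\<delta> > 0" unfolding \<delta>_def using piT_ge2[of h] by simp
  have Dsuc: "Dsum h0 (Suc h) = D + \<delta>" unfolding D_def \<delta>_def using Dsum_Suc[OF hh] .
  have cpos: "c \<ge> 0" unfolding c_def by simp
  have i: "\<delta> < \<Xi> (bad y)" if y: "y \<in> Bad" for y
  proof -
    have yO: "y \<in> Omega x" and yL: "y \<notin> LIMT I \<Xi> qs" using y unfolding Bad_def by auto
    have yT: "y \<in> Tstar" using Omega_Tstar[OF xT] yO by auto
    have ly: "length y = Suc h" and xy: "pfx x y" using Omega_pfx[OF yO] unfolding h_def by auto
    have sy: "pfx s y" using pfx_trans[OF sx xy] .
    have nys: "\<not> pfx y s"
    proof
      assume "pfx y s"
      then have "length y \<le> length s" by (rule pfx_len)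
      then show False using ly hh unfolding h0_def by simp
    qed
    obtain t0 where t0: "pfx s t0" "pfx t0 y" "\<not> limcond I \<Xi> qs h0 t0"
      using yL yT sy nys unfolding LIMT_eq h0_def by auto
    have "t0 = y"
    proof (rule ccontr)
      assume "t0 \<noteq> y"
      then have "pfx t0 x" using pfx_Omega[OF yO t0(2)] by auto
      then have "limcond I \<Xi> qs h0 t0" using LIMT_cond[OF x sx t0(1)] unfolding h0_def by simp
      then show False using t0(3) by simp
    qed
    moreover have "Dsum h0 (length y) = D + \<delta>" using ly Dsuc by simp
    ultimately have nc: "\<Xi> {k. fr I qs y k \<ge> 1 - (D + \<delta>)} < 1 - (D + \<delta>)"
      using t0(3) unfolding limcond_def by simp
    have sub: "E - bad y \<subseteq> {k. fr I qs y k \<ge> 1 - (D + \<delta>)}" unfolding bad_def by auto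
    have "\<Xi> (E - bad y) \<ge> \<Xi> E - \<Xi> (bad y)" by (rule F_diff_ge[OF F])
    moreover have "\<Xi> (E - bad y) \<le> \<Xi> {k. fr I qs y k \<ge> 1 - (D + \<delta>)}" using F_mono[OF F sub] .
    ultimately show ?thesis using nc condx by linarith
  qed
  have ii: "real (card {y\<in>Bad. k \<in> bad y}) \<le> c / \<delta>" for k
  proof (cases "k \<in> E")
    case False
    then have e: "{y\<in>Bad. k \<in> bad y} = {}" unfolding bad_def by auto
    have "c / \<delta> \<ge> 0" using cpos dpos by simp
    then show ?thesis unfolding e by simp
  next
    case True
    let ?Y = "{y\<in>Bad. k \<in> bad y}"
    have YO: "?Y \<subseteq> Omega x" unfolding Bad_def by auto
    have fx: "fr I qs x k \<ge> 1 - D" using True unfolding E_def by simp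
    have "real (card ?Y) * \<delta> = (\<Sum>y\<in>?Y. \<delta>)" by simp
    also have "\<dots> \<le> (\<Sum>y\<in>?Y. fr I qs x k - fr I qs y k)"
    proof (intro sum_mono)
      fix y assume "y \<in> ?Y"
      then have "fr I qs y k < 1 - D - \<delta>" unfolding bad_def by auto
      then show "\<delta> \<le> fr I qs x k - fr I qs y k" using fx by linarith
    qed
    also have "\<dots> \<le> (\<Sum>y\<in>Omega x. fr I qs x k - fr I qs y k)"
      by (intro sum_mono2) (use YO fr_mono in auto)
    also have "\<dots> \<le> c" unfolding fr_def
    proof (rule count_lemma(1)[OF Ifin Ipos])
      show "\<And>n. n \<in> I k \<Longrightarrow> x \<in> qs n \<Longrightarrow> real (card (Omega x - qs n)) \<le> c"
        unfolding c_def h_def using qn pfx_len[OF sx] by blast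
      show "\<And>n x'. x' \<in> Omega x \<Longrightarrow> x' \<in> qs n \<Longrightarrow> x \<in> qs n"
      proof -
        fix n x' assume "x' \<in> Omega x" "x' \<in> qs n"
        then show "x \<in> qs n" using subtree_pfx[of "qs n" x' x] q[of n] Omega_pfx by auto
      qed
    qed (rule cpos)
    finally have "real (card ?Y) * \<delta> \<le> c" .
    then show ?thesis using dpos by (simp add: pos_le_divide_eq)
  qed
  have fB: "finite Bad" unfolding Bad_def by simp
  have iii: "(\<Sum>y\<in>Bad. \<Xi> (bad y)) \<le> c / \<delta>" by (rule overlap[OF F fB]) (use ii in auto)
  have iv: "real (card Bad) * \<delta> \<le> (\<Sum>y\<in>Bad. \<Xi> (bad y))"
  proof -
    have "(\<Sum>y\<in>Bad. \<delta>) \<le> (\<Sum>y\<in>Bad. \<Xi> (bad y))" using i by (intro sum_mono) (auto intro: less_imp_le)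
    then show ?thesis by simp
  qed
  have "real (card Bad) * \<delta> \<le> c / \<delta>" using iii iv by linarith
  then have "real (card Bad) \<le> c / \<delta> / \<delta>" using dpos by (simp add: pos_le_divide_eq)
  also have "c / \<delta> / \<delta> = c * real (piT h)^2" unfolding \<delta>_def by (simp add: power2_eq_square)
  also have "\<dots> \<le> real (aT h) powr (1 - 1/real h0)"
    unfolding c_def using LIM_exponent[OF m(1) m(2)[folded h0_def] hh] .
  finally show ?thesis unfolding Bad_def h_def h0_def .
qed

lemma LIMT_in_E: "in_E (LIMT I \<Xi> qs)" "stem (LIMT I \<Xi> qs) = s"
proof -
  have sL: "s \<in> LIMT I \<Xi> qs" unfolding LIMT_eq using s_Tstar by auto
  have comp: "\<forall>x\<in>LIMT I \<Xi> qs. pfx x s \<or> pfx s x" unfolding LIMT_eq by auto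
  have h: "length s > 0" using m(2) by linarith
  show "in_E (LIMT I \<Xi> qs)" "stem (LIMT I \<Xi> qs) = s"
    using in_E_from[OF LIMT_subtree sL h comp] LIMT_norm by auto
qed

end

lemma LIMT_sl:
  assumes F: "FAM \<Xi>" and Ifin: "\<And>k. finite (I k)" and Ipos: "\<And>k. card (I k) > 0"
    and sl: "sl_sequence s l qs"
  shows "in_E (LIMT I \<Xi> qs)" "stem (LIMT I \<Xi> qs) = s"
    "\<And>x. x \<in> LIMT I \<Xi> qs \<Longrightarrow> pfx s x \<Longrightarrow> limcond I \<Xi> qs (length s) x"
    "\<And>x. x \<in> LIMT I \<Xi> qs \<Longrightarrow> pfx x s \<or> pfx s x"
proof -
  obtain m where m: "m \<ge> 2" "3*m < length s" "l = 1/real m"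
     "\<And>n. in_E (qs n) \<and> stem (qs n) = s \<and> subtree (qs n) \<and> s \<in> qs n"
     "\<And>n t. t \<in> qs n \<Longrightarrow> length s \<le> length t \<Longrightarrow>
        real (card (Omega t - qs n)) \<le> real (aT (length t)) powr (1 - 1/real m)"
    using sl_facts[OF sl] by blast
  show "in_E (LIMT I \<Xi> qs)" "stem (LIMT I \<Xi> qs) = s"
    using LIMT_in_E[OF F Ifin Ipos sl m] by auto
  show "\<And>x. x \<in> LIMT I \<Xi> qs \<Longrightarrow> pfx s x \<Longrightarrow> limcond I \<Xi> qs (length s) x"
    using LIMT_cond[OF F Ifin Ipos sl m] by auto
  show "\<And>x. x \<in> LIMT I \<Xi> qs \<Longrightarrow> pfx x s \<or> pfx s x"
    using LIMT_eq[OF F Ifin Ipos sl m] by auto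
qed

definition limfun :: "(nat \<Rightarrow> nat set) \<Rightarrow> (nat set \<Rightarrow> real) \<Rightarrow> (nat \<Rightarrow> nat list set) \<Rightarrow> nat list set" where
  "limfun I \<Xi> qs = (if \<exists>s l. sl_sequence s l qs then LIMT I \<Xi> qs else qs 0)"

lemma limfun_in_E:
  assumes F: "FAM \<Xi>" and Ifin: "\<And>k. finite (I k)" and Ipos: "\<And>k. card (I k) > 0"
    and "\<forall>n. in_E (qs n)"
  shows "in_E (limfun I \<Xi> qs)"
  using assms LIMT_sl(1)[OF F Ifin Ipos] unfolding limfun_def by auto

lemma q_miss:
  assumes q: "in_E q" and t: "t \<in> q" "pfx (stem q) t"
  shows "real (card (Omega t - q)) \<le> real (aT (length t))"
    and "2 * length (stem q) \<le> H \<Longrightarrow> H \<le> length t \<Longrightarrow> H > 0 \<Longrightarrow>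
         real (card (Omega t - q)) \<le> real (aT (length t)) powr (1 - 2/real H)"
proof -
  let ?h = "length (stem q)" and ?a = "real (aT (length t))"
  have b: "bound ?h \<le> mu t q" using in_E_stem(2)[OF q] t by auto
  have a1: "?a \<ge> 1" using aT_ge2[of "length t"] by simp
  have main: "real (card (Omega t - q)) \<le> ?a powr e" if e: "?h = 0 \<or> e \<ge> 1 - 1/real ?h" "e \<le> 1" for e
  proof (cases "?h = 0")
    case True
    then have e0: "Omega t - q = {}" using b bound_le_mu_iff[of ?h t q] by simp
    show ?thesis unfolding e0 by simp
  next
    case False
    then have "real (card (Omega t - q)) \<le> ?a powr (1 - 1/real ?h)" using b bound_le_mu_iff[of ?h t q] by simp
    also have "\<dots> \<le> ?a powr e" using e a1 False by (intro powr_mono) auto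
    finally show ?thesis .
  qed
  show "real (card (Omega t - q)) \<le> ?a"
    using main[of 1] by simp
  assume H: "2 * ?h \<le> H" "H \<le> length t" "H > 0"
  show "real (card (Omega t - q)) \<le> ?a powr (1 - 2/real H)"
  proof (rule main)
    show "1 - 2 / real H \<le> 1" by simp
    show "?h = 0 \<or> 1 - 1 / real ?h \<le> 1 - 2 / real H"
    proof (cases "?h = 0")
      case True then show ?thesis by simp
    next
      case False
      then have "2 / real H \<le> 2 / (2 * real ?h)" using H by (intro divide_left_mono) auto
      then show ?thesis using False by simp
    qed
  qed
qed

lemma q_succ:
  assumes q: "in_E q" and t: "t \<in> q" "pfx (stem q) t"
  shows "\<exists>y. y \<in> q \<inter> Omega t"
proof -
  have "real (card (Omega t - q)) \<le> real (aT (length t)) powr 1" using q_miss(1)[OF q t] by simp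
  then have "card (q \<inter> Omega t) \<ge> 2" by (rule card_succ_ge2) simp
  then show ?thesis by (metis card.empty ex_in_conv not_numeral_le_zero)
qed

lemma walk0:
  assumes q: "in_E q"
  shows "\<exists>t\<in>q. pfx (stem q) t \<and> length t = length (stem q) + d"
proof (induction d)
  case 0
  have "stem q \<in> q" using in_E_stem(1)[OF q] unfolding is_stem_def splitting_def by auto
  then show ?case by (intro bexI[of _ "stem q"]) auto
next
  case (Suc d)
  then obtain t where t: "t \<in> q" "pfx (stem q) t" "length t = length (stem q) + d" by auto
  obtain y where y: "y \<in> q \<inter> Omega t" using q_succ[OF q t(1,2)] by auto
  then have "pfx t y" "length y = Suc (length t)" using Omega_pfx by auto
  then show ?case using y t pfx_trans by (intro bexI[of _ y]) auto
qed

lemma walkG: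
  fixes G :: "nat list \<Rightarrow> real" and b :: "nat \<Rightarrow> real"
  assumes t: "t \<in> q"
    and step: "\<And>y. y \<in> q \<Longrightarrow> pfx t y \<Longrightarrow> \<exists>y'\<in>q \<inter> Omega y. G y - G y' \<le> b (length y)"
  shows "\<exists>t2\<in>q. pfx t t2 \<and> length t2 = length t + d \<and>
           G t - G t2 \<le> (\<Sum>i\<in>{length t..<length t + d}. b i)"
proof (induction d)
  case 0 then show ?case using t by (intro bexI[of _ t]) auto
next
  case (Suc d)
  then obtain y where y: "y \<in> q" "pfx t y" "length y = length t + d"
      "G t - G y \<le> (\<Sum>i\<in>{length t..<length t + d}. b i)" by auto
  obtain y' where y': "y' \<in> q \<inter> Omega y" "G y - G y' \<le> b (length y)" using step[OF y(1,2)] by auto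
  have "pfx y y'" "length y' = Suc (length y)" using Omega_pfx y'(1) by auto
  moreover have "(\<Sum>i\<in>{length t..<length t + Suc d}. b i) = (\<Sum>i\<in>{length t..<length t + d}. b i) + b (length y)"
    using y(3) by simp
  ultimately show ?case using y y' pfx_trans[OF y(2)] by (intro bexI[of _ y']) auto
qed

lemma aT_root:
  assumes "1 \<le> H" "H \<le> h"
  shows "real (aT h) powr (1 / real H) \<ge> real (piT h)"
proof -
  have p: "real (piT h) \<ge> 1" using piT_ge2[of h] by simp
  have "real (aT h) powr (1 / real H) = real (piT h) powr (real (h+2) * (1 / real H))" by (rule aT_powr)
  also have "\<dots> \<ge> real (piT h) powr 1"
    using assms p by (intro powr_mono) (auto simp: field_simps)
  finally show ?thesis using p by simp
qed

lemma qprime: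
  fixes Ps :: "nat list set set"
  assumes qE: "in_E q" and t2: "t2 \<in> q" "pfx (stem q) t2"
    and H: "0 < length t2" "2 * length (stem q) \<le> length t2" "2 * mm \<le> length t2" "mm \<ge> 1"
    and cP: "card Ps \<le> length t2" and fPs: "finite Ps"
    and Ps: "\<And>p. p \<in> Ps \<Longrightarrow> subtree p \<and> t2 \<in> p \<and>
        (\<forall>x\<in>p. pfx t2 x \<longrightarrow> real (card (Omega x - p)) \<le> real (aT (length x)) powr (1 - 1/real mm))"
  defines "q' \<equiv> {x. pfx x t2} \<union> {x\<in>q. pfx t2 x \<and> (\<forall>p\<in>Ps. x \<in> p)}"
  shows "in_E q'" "q' \<subseteq> q" "\<And>p. p \<in> Ps \<Longrightarrow> q' \<subseteq> p"
proof -
  have qs: "subtree q" using qE unfolding in_E_def by auto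
  show sub: "q' \<subseteq> q"
  proof
    fix x assume "x \<in> q'"
    then have "pfx x t2 \<or> x \<in> q" unfolding q'_def by auto
    then show "x \<in> q" using subtree_pfx[OF qs t2(1), of x] by blast
  qed
  show "\<And>p. p \<in> Ps \<Longrightarrow> q' \<subseteq> p"
  proof -
    fix p assume p: "p \<in> Ps"
    show "q' \<subseteq> p"
    proof
      fix x assume "x \<in> q'"
      then have "pfx x t2 \<or> x \<in> p" using p unfolding q'_def by auto
      moreover have "subtree p" "t2 \<in> p" using Ps[OF p] by auto
      ultimately show "x \<in> p" using subtree_pfx by blast
    qed
  qed
  have t2q': "t2 \<in> q'" unfolding q'_def by simp
  have comp: "\<forall>x\<in>q'. pfx x t2 \<or> pfx t2 x" unfolding q'_def by auto
  have st: "subtree q'" unfolding subtree_def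
  proof (intro conjI allI impI)
    show "q' \<subseteq> Tstar" using sub qs unfolding subtree_def by auto
    show "q' \<noteq> {}" using t2q' by auto
  next
    fix y v assume yv: "y @ v \<in> q'"
    have py: "pfx y (y @ v)" by (simp add: pfx_def)
    show "y \<in> q'"
    proof (cases "pfx (y @ v) t2")
      case True then show ?thesis unfolding q'_def using pfx_trans[OF py] by auto
    next
      case False
      then have a: "y @ v \<in> q" "pfx t2 (y @ v)" "\<forall>p\<in>Ps. y @ v \<in> p" using yv unfolding q'_def by auto
      have "pfx y t2 \<or> pfx t2 y" using pfx_comparable[OF py a(2)] .
      then show ?thesis
      proof
        assume "pfx y t2" then show ?thesis unfolding q'_def by auto
      next
        assume ty: "pfx t2 y"
        have "y \<in> q" using subtree_pfx[OF qs a(1) py] .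
        moreover have "\<forall>p\<in>Ps. y \<in> p"
        proof
          fix p assume p: "p \<in> Ps"
          then have "subtree p" "y @ v \<in> p" using Ps a(3) by auto
          then show "y \<in> p" using subtree_pfx py by blast
        qed
        ultimately show ?thesis unfolding q'_def using ty by auto
      qed
    qed
  qed
  have nrm: "\<forall>x\<in>q'. pfx t2 x \<longrightarrow>
      real (card (Omega x - q')) \<le> real (aT (length x)) powr (1 - 1/real (length t2))"
  proof (intro ballI impI)
    fix x assume x: "x \<in> q'" and tx: "pfx t2 x"
    let ?H = "length t2" and ?a = "real (aT (length x))"
    have Hx: "?H \<le> length x" using pfx_len[OF tx] .
    have xq: "x \<in> q" and xP: "\<forall>p\<in>Ps. x \<in> p"
    proof -
      have "x \<in> q \<and> (\<forall>p\<in>Ps. x \<in> p)"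
      proof (cases "pfx x t2")
        case True
        have "t2 = x" using pfx_antisym[OF tx pfx_len[OF True]] by simp
        moreover have "\<forall>p\<in>Ps. t2 \<in> p" using Ps by blast
        ultimately show ?thesis using t2 by simp
      next
        case False then show ?thesis using x unfolding q'_def by auto
      qed
      then show "x \<in> q" "\<forall>p\<in>Ps. x \<in> p" by auto
    qed
    have sqx: "pfx (stem q) x" using pfx_trans[OF t2(2) tx] .
    have a1: "?a \<ge> 1" using aT_ge2[of "length x"] by simp
    define b where "b = ?a powr (1 - 2/real ?H)"
    have bq: "real (card (Omega x - q)) \<le> b"
      unfolding b_def using q_miss(2)[OF qE xq sqx, of ?H] H Hx by auto
    have bp: "real (card (Omega x - p)) \<le> b" if p: "p \<in> Ps" for p
    proof -
      have xp: "x \<in> p" using xP p by blast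
      have "real (card (Omega x - p)) \<le> ?a powr (1 - 1/real mm)" using Ps[OF p] xp tx by blast
      also have "\<dots> \<le> b" unfolding b_def
      proof (intro powr_mono a1)
        have "2 / real ?H \<le> 2 / (2 * real mm)" using H by (intro divide_left_mono) auto
        then show "1 - 1/real mm \<le> 1 - 2/real ?H" using H by simp
      qed
      finally show ?thesis .
    qed
    have subset: "Omega x - q' \<subseteq> (Omega x - q) \<union> (\<Union>p\<in>Ps. Omega x - p)"
    proof
      fix y assume y: "y \<in> Omega x - q'"
      then have yO: "y \<in> Omega x" and yq: "y \<notin> q'" by auto
      have "pfx x y" "length y = Suc (length x)" using Omega_pfx[OF yO] by auto
      then have "pfx t2 y" using pfx_trans[OF tx] by auto
      moreover have "\<not> pfx y t2"
      proof
        assume "pfx y t2"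
        then have "length y \<le> length t2" by (rule pfx_len)
        then show False using \<open>length y = Suc (length x)\<close> Hx by simp
      qed
      ultimately have "y \<notin> q \<or> (\<exists>p\<in>Ps. y \<notin> p)" using yq unfolding q'_def by blast
      then show "y \<in> (Omega x - q) \<union> (\<Union>p\<in>Ps. Omega x - p)" using yO by blast
    qed
    let ?A = "Omega x - q" and ?U = "\<Union>p\<in>Ps. Omega x - p"
    have c1: "card (Omega x - q') \<le> card (?A \<union> ?U)"
      by (rule card_mono) (use fPs subset in simp_all)
    have c2: "card (?A \<union> ?U) \<le> card ?A + card ?U" by (rule card_Un_le)
    have c3: "card ?U \<le> (\<Sum>p\<in>Ps. card (Omega x - p))" by (rule card_UN_le[OF fPs])
    have n: "card (Omega x - q') \<le> card ?A + (\<Sum>p\<in>Ps. card (Omega x - p))" using c1 c2 c3 by linarith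
    then have "real (card (Omega x - q')) \<le> real (card ?A + (\<Sum>p\<in>Ps. card (Omega x - p)))"
      by (simp only: of_nat_le_iff)
    also have "\<dots> = real (card ?A) + (\<Sum>p\<in>Ps. real (card (Omega x - p)))" by (simp add: of_nat_sum)
    also have "\<dots> \<le> b + (\<Sum>p\<in>Ps. b)" using bq bp by (intro add_mono sum_mono) auto
    also have "\<dots> = (1 + real (card Ps)) * b" by (simp add: algebra_simps)
    also have "\<dots> \<le> ?a powr (1 / real ?H) * b"
    proof (rule mult_right_mono)
      have "piT (length x) \<ge> length x + 2" using piT_ge[of "length x"] two_pow_ge[of "length x + 1"]
        by linarith
      then have "real (piT (length x)) \<ge> real (length x) + 2" by linarith
      moreover have "?a powr (1 / real ?H) \<ge> real (piT (length x))" using aT_root[of ?H "length x"] H Hx by simp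
      ultimately show "1 + real (card Ps) \<le> ?a powr (1 / real ?H)" using cP Hx by simp
      show "0 \<le> b" unfolding b_def by simp
    qed
    also have "\<dots> = ?a powr (1 / real ?H + (1 - 2/real ?H))" unfolding b_def
      by (rule powr_add[symmetric])
    also have "1 / real ?H + (1 - 2/real ?H) = 1 - 1/real ?H" by (simp add: field_simps)
    finally show "real (card (Omega x - q')) \<le> ?a powr (1 - 1/real ?H)" .
  qed
  show "in_E q'" using in_E_from[OF st t2q' H(1) comp nrm] by simp
qed

definition avgf :: "(nat \<Rightarrow> nat set) \<Rightarrow> (nat \<Rightarrow> nat list set) \<Rightarrow> nat set \<Rightarrow> nat list \<Rightarrow> real" where
  "avgf I Q u y = (1 / real (card u)) * (\<Sum>k\<in>u. fr I Q y k)"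

definition Gf :: "(nat \<Rightarrow> nat set) \<Rightarrow> (nat \<Rightarrow> nat \<Rightarrow> nat list set) \<Rightarrow> nat \<Rightarrow> nat set \<Rightarrow> nat list \<Rightarrow> real" where
  "Gf I qs jstar u y = (\<Sum>j<jstar. avgf I (qs j) u y)"

lemma fr_pfx_mono:
  assumes Ifin: "finite (I k)" and sub: "\<And>n. subtree (Q n)" and p: "pfx y z"
  shows "fr I Q z k \<le> fr I Q y k"
proof -
  have "{n\<in>I k. z \<in> Q n} \<subseteq> {n\<in>I k. y \<in> Q n}"
  proof
    fix n assume "n \<in> {n\<in>I k. z \<in> Q n}"
    then have "n \<in> I k" "z \<in> Q n" by auto
    then show "n \<in> {n\<in>I k. y \<in> Q n}" using subtree_pfx[OF sub[of n] _ p] by auto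
  qed
  then have "card {n\<in>I k. z \<in> Q n} \<le> card {n\<in>I k. y \<in> Q n}"
    by (intro card_mono) (auto simp: Ifin)
  then show ?thesis unfolding fr_def by (intro divide_right_mono) auto
qed

lemma fr_nonneg: "fr I Q y k \<ge> 0" unfolding fr_def by simp

lemma avgf_pfx_mono:
  assumes Ifin: "\<And>k. finite (I k)" and sub: "\<And>n. subtree (Q n)" and p: "pfx y z"
  shows "avgf I Q u z \<le> avgf I Q u y"
  unfolding avgf_def
  by (intro mult_left_mono sum_mono fr_pfx_mono[OF Ifin sub p]) auto

lemma Gstep:
  assumes Ifin: "\<And>k. finite (I k)" and Ipos: "\<And>k. card (I k) > 0"
    and sub: "\<And>j n. j < jstar \<Longrightarrow> subtree (qs j n)"
    and QN: "\<And>j n t. j < jstar \<Longrightarrow> t \<in> qs j n \<Longrightarrow> length s \<le> length t \<Longrightarrow>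
        real (card (Omega t - qs j n)) \<le> real (aT (length t)) powr (1 - 1/real mm)"
    and qE: "in_E q" and fu: "finite u" and une: "u \<noteq> {}"
    and y: "y \<in> q" "pfx (stem q) y" "length s \<le> length y"
  shows "\<exists>y'\<in>q \<inter> Omega y. Gf I qs jstar u y - Gf I qs jstar u y' \<le> 2 * real jstar / 2^(length y + 1)"
proof -
  define a where "a = real (aT (length y))"
  have a2: "a \<ge> 2" unfolding a_def using aT_ge2[of "length y"] by simp
  define cu where "cu = 1 / real (card u)"
  have cu: "cu * real (card u) = 1" unfolding cu_def using fu une by (simp add: card_gt_0_iff)
  let ?G = "Gf I qs jstar u"
  have Adiff: "avgf I Q u y - avgf I Q u y' = cu * (\<Sum>k\<in>u. fr I Q y k - fr I Q y' k)" for Q y'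
    unfolding avgf_def cu_def by (simp only: sum_subtractf right_diff_distrib)
  have Gdiff: "?G y - ?G y' = (\<Sum>j<jstar. cu * (\<Sum>k\<in>u. fr I (qs j) y k - fr I (qs j) y' k))" for y'
    unfolding Gf_def by (simp only: sum_subtractf[symmetric] Adiff)
  have inner: "(\<Sum>y'\<in>Omega y. fr I (qs j) y k - fr I (qs j) y' k) \<le> a" if j: "j < jstar" for j k
    unfolding fr_def
  proof (rule count_lemma(1)[OF Ifin Ipos])
    show "\<And>n. n \<in> I k \<Longrightarrow> y \<in> qs j n \<Longrightarrow> real (card (Omega y - qs j n)) \<le> a"
    proof -
      fix n assume "n \<in> I k" "y \<in> qs j n"
      then have "real (card (Omega y - qs j n)) \<le> real (aT (length y)) powr (1 - 1/real mm)"
        using QN[OF j] y(3) by blast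
      also have "\<dots> \<le> a" unfolding a_def using a2 a_def by (intro powr_le_a) auto
      finally show "real (card (Omega y - qs j n)) \<le> a" .
    qed
    show "\<And>n x. x \<in> Omega y \<Longrightarrow> x \<in> qs j n \<Longrightarrow> y \<in> qs j n"
    proof -
      fix n x assume "x \<in> Omega y" "x \<in> qs j n"
      then show "y \<in> qs j n" using subtree_pfx[OF sub[OF j, of n], of x y] Omega_pfx by blast
    qed
  qed (use a2 in simp)
  have S0: "(\<Sum>y'\<in>Omega y. ?G y - ?G y') \<le> real jstar * a"
  proof -
    have "(\<Sum>y'\<in>Omega y. ?G y - ?G y') =
          (\<Sum>y'\<in>Omega y. \<Sum>j<jstar. cu * (\<Sum>k\<in>u. fr I (qs j) y k - fr I (qs j) y' k))"
      by (rule sum.cong[OF refl Gdiff])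
    also have "\<dots> = (\<Sum>j<jstar. \<Sum>y'\<in>Omega y. cu * (\<Sum>k\<in>u. fr I (qs j) y k - fr I (qs j) y' k))"
      by (rule sum.swap)
    also have "\<dots> = (\<Sum>j<jstar. cu * (\<Sum>k\<in>u. \<Sum>y'\<in>Omega y. fr I (qs j) y k - fr I (qs j) y' k))"
    proof (rule sum.cong[OF refl])
      fix j
      have "(\<Sum>y'\<in>Omega y. cu * (\<Sum>k\<in>u. fr I (qs j) y k - fr I (qs j) y' k))
          = cu * (\<Sum>y'\<in>Omega y. \<Sum>k\<in>u. fr I (qs j) y k - fr I (qs j) y' k)"
        by (rule sum_distrib_left[symmetric])
      also have "(\<Sum>y'\<in>Omega y. \<Sum>k\<in>u. fr I (qs j) y k - fr I (qs j) y' k)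
          = (\<Sum>k\<in>u. \<Sum>y'\<in>Omega y. fr I (qs j) y k - fr I (qs j) y' k)"
        by (rule sum.swap)
      finally show "(\<Sum>y'\<in>Omega y. cu * (\<Sum>k\<in>u. fr I (qs j) y k - fr I (qs j) y' k))
          = cu * (\<Sum>k\<in>u. \<Sum>y'\<in>Omega y. fr I (qs j) y k - fr I (qs j) y' k)" .
    qed
    also have "\<dots> \<le> (\<Sum>j<jstar. cu * (\<Sum>k\<in>u. a))"
      using inner unfolding cu_def by (intro sum_mono mult_left_mono) auto
    also have "\<dots> = real jstar * a"
    proof -
      have "cu * (\<Sum>k\<in>u. a) = (cu * real (card u)) * a" by simp
      then have "cu * (\<Sum>k\<in>u. a) = a" using cu by simp
      then show ?thesis by simp
    qed
    finally show ?thesis .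
  qed
  have nonneg: "?G y' \<le> ?G y" if "y' \<in> Omega y" for y'
  proof -
    have p: "pfx y y'" using Omega_pfx that by auto
    show ?thesis unfolding Gf_def
      by (intro sum_mono avgf_pfx_mono[OF Ifin _ p]) (use sub in auto)
  qed
  define Q where "Q = q \<inter> Omega y"
  have fQ: "finite Q" unfolding Q_def by simp
  have QO: "Q \<subseteq> Omega y" unfolding Q_def by auto
  have cQ: "real (card Q) \<ge> a^2 - a"
  proof -
    have m1: "real (card (Omega y - q)) \<le> a" unfolding a_def by (rule q_miss(1)[OF qE y(1,2)])
    have "card (Omega y - q) = card (Omega y) - card (Omega y \<inter> q)"
      by (rule card_Diff_subset_Int) simp
    moreover have "card (Omega y \<inter> q) \<le> card (Omega y)" by (rule card_mono) auto
    moreover have "Omega y \<inter> q = Q" unfolding Q_def by auto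
    ultimately have "card (Omega y) = card Q + card (Omega y - q)" by simp
    moreover have "real (card (Omega y)) = a^2" unfolding a_def by (simp add: card_Omega MT_eq)
    ultimately show ?thesis using m1 by simp
  qed
  have aa: "a^2 - a \<ge> a"
  proof -
    have "a * a \<ge> 2 * a" using mult_right_mono[OF a2, of a] a2 by simp
    then show ?thesis by (simp add: power2_eq_square)
  qed
  have Qne: "Q \<noteq> {}"
  proof
    assume "Q = {}"
    then have "a^2 - a \<le> 0" using cQ by simp
    then show False using aa a2 by linarith
  qed
  have key: "\<exists>y'\<in>Q. ?G y - ?G y' \<le> 2 * real jstar / a"
  proof (rule ccontr)
    assume "\<not> ?thesis"
    then have gt: "\<forall>y'\<in>Q. 2 * real jstar / a < ?G y - ?G y'" by auto
    have "(\<Sum>y'\<in>Q. 2 * real jstar / a) < (\<Sum>y'\<in>Q. ?G y - ?G y')"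
      by (rule sum_strict_mono[OF fQ Qne]) (use gt in auto)
    also have "\<dots> \<le> (\<Sum>y'\<in>Omega y. ?G y - ?G y')"
      by (rule sum_mono2) (use QO nonneg in auto)
    also have "\<dots> \<le> real jstar * a" by (rule S0)
    finally have lt: "real (card Q) * (2 * real jstar / a) < real jstar * a" by simp
    have b1: "real (card Q) * (2 * real jstar / a) \<ge> (a^2 - a) * (2 * real jstar / a)"
      using cQ a2 by (intro mult_right_mono) auto
    have b2: "(a^2 - a) * (2 * real jstar / a) = real jstar * (2 * (a - 1))"
      using a2 by (simp add: field_simps power2_eq_square)
    have b3: "real jstar * (2 * (a - 1)) \<ge> real jstar * a"
      using a2 by (intro mult_left_mono) auto
    show False using lt b1 b2 b3 by linarith
  qed
  then obtain y' where y': "y' \<in> Q" "?G y - ?G y' \<le> 2 * real jstar / a" by auto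
  have "a \<ge> 2^(length y + 1)"
  proof -
    have "aT (length y) \<ge> 2^(length y + 1)" using aT_ge[of "length y"] piT_ge[of "length y"] by linarith
    then have "real (aT (length y)) \<ge> real (2^(length y + 1))" by linarith
    then show ?thesis unfolding a_def by simp
  qed
  then have "2 * real jstar / a \<le> 2 * real jstar / 2^(length y + 1)"
    using a2 by (intro divide_left_mono) auto
  then have "?G y - ?G y' \<le> 2 * real jstar / 2^(length y + 1)" using y'(2) by linarith
  moreover have "y' \<in> q \<inter> Omega y" using y'(1) unfolding Q_def .
  ultimately show ?thesis by blast
qed

lemma main_strong:
  fixes I :: "nat \<Rightarrow> nat set" and \<Xi> :: "nat set \<Rightarrow> real" and qs :: "nat \<Rightarrow> nat \<Rightarrow> nat list set"
    and B :: "nat \<Rightarrow> nat set" and q :: "nat list set"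
  assumes F: "FAM \<Xi>" and Ifin: "\<And>k. finite (I k)" and Ipos: "\<And>k. card (I k) > 0"
    and SL: "\<forall>j<jstar. sl_sequence s l (qs j)" and eps: "\<epsilon> > 0"
    and qE: "in_E q" and qsub: "\<forall>j<jstar. q \<subseteq> limfun I \<Xi> (qs j)"
  shows "\<exists>u q'. finite u \<and> u \<noteq> {} \<and> u \<inter> {..<kstar} = {} \<and> in_E q' \<and> q' \<subseteq> q \<and>
     (\<forall>m<mstar. \<Xi> (B m) - \<epsilon> < real (card (u \<inter> B m)) / real (card u) \<and>
                real (card (u \<inter> B m)) / real (card u) < \<Xi> (B m) + \<epsilon>) \<and>
     (\<forall>j<jstar. (1 / real (card u)) *
         (\<Sum>k\<in>u. real (card {n \<in> I k. q' \<subseteq> qs j n}) / real (card (I k))) \<ge> 1 - l - \<epsilon>)"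
proof (cases "jstar = 0")
  case True
  obtain u where u: "finite u" "u \<noteq> {}" "u \<inter> {..<kstar} = {}"
      "\<forall>i<mstar. \<bar>real (card (u \<inter> B i)) / real (card u) - \<Xi> (B i)\<bar> < \<epsilon>"
    using approx[OF F eps, where X=B and p=mstar and kstar=kstar] by blast
  show ?thesis using u qE True by (intro exI[of _ u] exI[of _ q]) (auto simp: abs_less_iff)
next
  case False
  then have j0: "0 < jstar" by simp
  obtain mm where mm: "mm \<ge> 2" "3*mm < length s" "l = 1/real mm"
    using sl_facts[OF SL[rule_format, OF j0]] by blast
  have QS: "in_E (qs j n) \<and> stem (qs j n) = s \<and> subtree (qs j n) \<and> s \<in> qs j n" if "j < jstar" for j n
    using sl_facts[OF SL[rule_format, OF that]] by blast
  have QN: "real (card (Omega t - qs j n)) \<le> real (aT (length t)) powr (1 - 1/real mm)"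
    if j: "j < jstar" and t: "t \<in> qs j n" "length s \<le> length t" for j n t
  proof -
    obtain m' where m': "m' \<ge> 2" "l = 1/real m'"
      "\<And>n t. t \<in> qs j n \<Longrightarrow> length s \<le> length t \<Longrightarrow>
        real (card (Omega t - qs j n)) \<le> real (aT (length t)) powr (1 - 1/real m')"
      using sl_facts[OF SL[rule_format, OF j]] by blast
    have "m' = mm" using m'(1,2) mm(1,3) by (simp add: field_simps)
    then show ?thesis using m'(3)[OF t] by simp
  qed
  have sub: "\<And>j n. j < jstar \<Longrightarrow> subtree (qs j n)" using QS by blast
  have LJ: "q \<subseteq> LIMT I \<Xi> (qs j)" if "j < jstar" for j
  proof -
    have "\<exists>s l. sl_sequence s l (qs j)" using SL that by blast
    then have "limfun I \<Xi> (qs j) = LIMT I \<Xi> (qs j)" unfolding limfun_def by simp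
    moreover have "q \<subseteq> limfun I \<Xi> (qs j)" using qsub that by blast
    ultimately show ?thesis by simp
  qed
  have LC: "limcond I \<Xi> (qs j) (length s) x" if "j < jstar" "x \<in> LIMT I \<Xi> (qs j)" "pfx s x" for j x
    using LIMT_sl(3)[where I=I, OF F Ifin Ipos SL[rule_format, OF that(1)]] that(2,3) by blast
  have LP: "pfx x s \<or> pfx s x" if "j < jstar" "x \<in> LIMT I \<Xi> (qs j)" for j x
    using LIMT_sl(4)[where I=I, OF F Ifin Ipos SL[rule_format, OF that(1)]] that(2) by blast
  define sq where "sq = stem q"
  define hq where "hq = length sq"
  define H0 where "H0 = max (length s) hq + nat \<lceil>4 * real jstar / \<epsilon>\<rceil>"
  have H0s: "length s \<le> H0" "hq \<le> H0" unfolding H0_def by auto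
  have H0e: "2 * real jstar / 2^H0 \<le> \<epsilon> / 2"
  proof -
    have "2^H0 \<ge> H0 + (1::nat)" by (rule two_pow_ge)
    then have "real (2^H0) \<ge> real H0" by linarith
    moreover have "real H0 \<ge> real (nat \<lceil>4 * real jstar / \<epsilon>\<rceil>)" unfolding H0_def by simp
    moreover have "real (nat \<lceil>4 * real jstar / \<epsilon>\<rceil>) \<ge> 4 * real jstar / \<epsilon>" by linarith
    moreover have "(2::real)^H0 = real (2^H0)" by simp
    ultimately have "(2::real)^H0 \<ge> 4 * real jstar / \<epsilon>" by linarith
    then have "\<epsilon> * 2^H0 \<ge> 4 * real jstar" using eps by (simp add: field_simps)
    then show ?thesis using eps by (simp add: field_simps)
  qed
  obtain t where t: "t \<in> q" "pfx sq t" "length t = H0"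
    using walk0[OF qE, of "H0 - hq"] H0s unfolding sq_def hq_def by auto
  have st: "pfx s t"
  proof -
    have "t \<in> LIMT I \<Xi> (qs 0)" using LJ[OF j0] t(1) by auto
    then have "pfx t s \<or> pfx s t" using LP[OF j0] by blast
    then show ?thesis
    proof
      assume ts: "pfx t s"
      then have "t = s" using pfx_antisym[OF ts] t(3) H0s by simp
      then show ?thesis by simp
    qed
  qed
  define D where "D = Dsum (length s) H0"
  have D: "0 \<le> D" "2 * D \<le> l"
  proof -
    show "0 \<le> D" unfolding D_def by (rule Dsum_nonneg)
    have "D \<le> 1 / (2 * real mm)" unfolding D_def using Dsum_small[OF mm(2)] mm(1) by simp
    then have "2 * D \<le> 2 * (1 / (2 * real mm))" by linarith
    also have "2 * (1 / (2 * real mm)) = l" using mm(3) by simp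
    finally show "2 * D \<le> l" .
  qed
  define E where "E j = {k. fr I (qs j) t k \<ge> 1 - D}" for j
  have EX: "\<Xi> (E j) \<ge> 1 - D" if j: "j < jstar" for j
  proof -
    have "t \<in> LIMT I \<Xi> (qs j)" using LJ[OF j] t(1) by auto
    then have "limcond I \<Xi> (qs j) (length s) t" using LC[OF j] st by blast
    then show ?thesis unfolding limcond_def E_def D_def t(3) .
  qed
  define X where "X i = (if i < mstar then B i else E (i - mstar))" for i
  have eps2: "\<epsilon> / 2 > 0" using eps by simp
  obtain u where u: "finite u" "u \<noteq> {}" "u \<inter> {..<kstar} = {}"
      "\<forall>i<mstar + jstar. \<bar>real (card (u \<inter> X i)) / real (card u) - \<Xi> (X i)\<bar> < \<epsilon> / 2"
    using approx[OF F eps2, where X=X and p="mstar + jstar" and kstar=kstar] by blast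
  have uB: "\<bar>real (card (u \<inter> B i)) / real (card u) - \<Xi> (B i)\<bar> < \<epsilon> / 2" if "i < mstar" for i
  proof -
    have "i < mstar + jstar" using that by simp
    then have "\<bar>real (card (u \<inter> X i)) / real (card u) - \<Xi> (X i)\<bar> < \<epsilon> / 2" using u(4) by blast
    moreover have "X i = B i" unfolding X_def using that by simp
    ultimately show ?thesis by simp
  qed
  have uE: "real (card (u \<inter> E j)) / real (card u) > \<Xi> (E j) - \<epsilon> / 2" if "j < jstar" for j
  proof -
    have eq: "X (mstar + j) = E j" unfolding X_def by simp
    have "mstar + j < mstar + jstar" using that by simp
    then have "\<bar>real (card (u \<inter> X (mstar + j))) / real (card u) - \<Xi> (X (mstar + j))\<bar> < \<epsilon> / 2"
      using u(4) by blast
    then have "\<bar>real (card (u \<inter> E j)) / real (card u) - \<Xi> (E j)\<bar> < \<epsilon> / 2" unfolding eq .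
    then show ?thesis unfolding abs_less_iff by linarith
  qed
  have cu: "real (card u) > 0" using u(1,2) by (simp add: card_gt_0_iff)
  have avg_t: "avgf I (qs j) u t \<ge> 1 - l - \<epsilon> / 2" if j: "j < jstar" for j
  proof -
    define r where "r = real (card (u \<inter> E j)) / real (card u)"
    have r: "r \<ge> 1 - D - \<epsilon> / 2" using uE[OF j] EX[OF j] unfolding r_def by linarith
    have "(\<Sum>k\<in>u. fr I (qs j) t k) \<ge> (\<Sum>k\<in>u \<inter> E j. fr I (qs j) t k)"
      by (rule sum_mono2) (use u(1) fr_nonneg in auto)
    moreover have "(\<Sum>k\<in>u \<inter> E j. fr I (qs j) t k) \<ge> (\<Sum>k\<in>u \<inter> E j. 1 - D)"
      by (rule sum_mono) (auto simp: E_def)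
    moreover have "(\<Sum>k\<in>u \<inter> E j. 1 - D) = real (card (u \<inter> E j)) * (1 - D)" by simp
    ultimately have s1: "(\<Sum>k\<in>u. fr I (qs j) t k) \<ge> real (card (u \<inter> E j)) * (1 - D)" by linarith
    have "avgf I (qs j) u t \<ge> (1 / real (card u)) * (real (card (u \<inter> E j)) * (1 - D))"
      unfolding avgf_def using s1 cu by (intro mult_left_mono) auto
    also have "(1 / real (card u)) * (real (card (u \<inter> E j)) * (1 - D)) = r * (1 - D)"
      unfolding r_def by simp
    finally have a1: "avgf I (qs j) u t \<ge> r * (1 - D)" .
    have "l \<le> 1" using mm(1,3) by simp
    then have D1: "1 - D \<ge> 0" using D by linarith
    have "r * (1 - D) \<ge> (1 - D - \<epsilon> / 2) * (1 - D)" using r D1 by (intro mult_right_mono) auto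
    moreover have "(1 - D - \<epsilon> / 2) * (1 - D) = 1 - 2*D - \<epsilon> / 2 + (D * D + (\<epsilon> / 2) * D)"
      by (simp add: field_simps)
    moreover have "D * D + (\<epsilon> / 2) * D \<ge> 0" using D eps by simp
    ultimately show ?thesis using a1 D by linarith
  qed
  define W where "W = (\<Union>k\<in>u. I k)"
  have fW: "finite W" unfolding W_def using u(1) Ifin by auto
  define H where "H = max (max H0 (2 * hq)) (max (2 * mm) (jstar * card W)) + 1"
  have H: "H0 \<le> H" "2 * hq \<le> H" "2 * mm \<le> H" "jstar * card W \<le> H" "0 < H"
    unfolding H_def by auto
  let ?G = "Gf I qs jstar u"
  have step: "\<exists>y'\<in>q \<inter> Omega y. ?G y - ?G y' \<le> 2 * real jstar / 2^(length y + 1)"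
    if y: "y \<in> q" "pfx t y" for y
  proof (rule Gstep[OF Ifin Ipos sub QN qE u(1) u(2) y(1)])
    show "pfx (stem q) y" using pfx_trans[OF t(2) y(2)] unfolding sq_def .
    show "length s \<le> length y" using pfx_len[OF y(2)] t(3) H0s by simp
  qed auto
  obtain t2 where t2: "t2 \<in> q" "pfx t t2" "length t2 = length t + (H - H0)"
      "?G t - ?G t2 \<le> (\<Sum>i\<in>{length t..<length t + (H - H0)}. 2 * real jstar / 2^(i+1))"
    using walkG[OF t(1), of ?G "\<lambda>i. 2 * real jstar / 2^(i+1)" "H - H0"] step by blast
  have lt2: "length t2 = H" using t2(3) t(3) H by simp
  have Gt: "?G t - ?G t2 \<le> \<epsilon> / 2"
  proof -
    have "(\<Sum>i\<in>{length t..<length t + (H - H0)}. 2 * real jstar / 2^(i+1)) \<le> 2 * real jstar / 2^(length t)"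
      by (rule geom_le) simp
    then show ?thesis using t2(4) H0e t(3) by simp
  qed
  have avg_t2: "avgf I (qs j) u t2 \<ge> 1 - l - \<epsilon>" if j: "j < jstar" for j
  proof -
    have mono: "avgf I (qs j') u t2 \<le> avgf I (qs j') u t" if "j' < jstar" for j'
      by (rule avgf_pfx_mono[OF Ifin _ t2(2)]) (use sub that in auto)
    have "?G t - ?G t2 = (\<Sum>j'<jstar. avgf I (qs j') u t - avgf I (qs j') u t2)"
      unfolding Gf_def by (simp only: sum_subtractf)
    also have "\<dots> \<ge> avgf I (qs j) u t - avgf I (qs j) u t2"
      by (rule member_le_sum) (use j mono in auto)
    finally show ?thesis using Gt avg_t[OF j] by linarith
  qed
  define Ps where "Ps = {p. \<exists>j n. p = qs j n \<and> j < jstar \<and> n \<in> W \<and> t2 \<in> qs j n}"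
  have PsI: "Ps \<subseteq> (\<lambda>(j, n). qs j n) ` ({..<jstar} \<times> W)" unfolding Ps_def by auto
  have fPs: "finite Ps" using finite_subset[OF PsI] fW by auto
  have cPs: "card Ps \<le> length t2"
  proof -
    have "card Ps \<le> card ((\<lambda>(j, n). qs j n) ` ({..<jstar} \<times> W))"
      by (rule card_mono) (use PsI fW in auto)
    also have "\<dots> \<le> card ({..<jstar} \<times> W)" by (rule card_image_le) (use fW in auto)
    also have "\<dots> = jstar * card W" by (simp add: card_cartesian_product)
    finally show ?thesis using H(4) lt2 by simp
  qed
  have PsP: "subtree p \<and> t2 \<in> p \<and>
        (\<forall>x\<in>p. pfx t2 x \<longrightarrow> real (card (Omega x - p)) \<le> real (aT (length x)) powr (1 - 1/real mm))"
    if p: "p \<in> Ps" for p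
  proof -
    obtain j n where jn: "p = qs j n" "j < jstar" "t2 \<in> qs j n" using p unfolding Ps_def by auto
    have "\<forall>x\<in>p. pfx t2 x \<longrightarrow> real (card (Omega x - p)) \<le> real (aT (length x)) powr (1 - 1/real mm)"
    proof (intro ballI impI)
      fix x assume "x \<in> p" "pfx t2 x"
      moreover have "length s \<le> length x" using pfx_len[OF \<open>pfx t2 x\<close>] lt2 H(1) H0s by simp
      ultimately show "real (card (Omega x - p)) \<le> real (aT (length x)) powr (1 - 1/real mm)"
        using QN[OF jn(2)] jn(1) by blast
    qed
    then show ?thesis using sub[OF jn(2)] jn by auto
  qed
  define q' where "q' = {x. pfx x t2} \<union> {x\<in>q. pfx t2 x \<and> (\<forall>p\<in>Ps. x \<in> p)}"
  have t2s: "pfx (stem q) t2" using pfx_trans[OF t(2) t2(2)] unfolding sq_def .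
  have Hq: "0 < length t2" "2 * length (stem q) \<le> length t2" "2 * mm \<le> length t2" "mm \<ge> 1"
    using H lt2 mm unfolding hq_def sq_def by auto
  note QP = qprime[OF qE t2(1) t2s Hq cPs fPs PsP, folded q'_def]
  have ratio: "(1 / real (card u)) * (\<Sum>k\<in>u. real (card {n \<in> I k. q' \<subseteq> qs j n}) / real (card (I k)))
      \<ge> avgf I (qs j) u t2" if j: "j < jstar" for j
    unfolding avgf_def
  proof (intro mult_left_mono sum_mono)
    fix k assume k: "k \<in> u"
    have "{n \<in> I k. t2 \<in> qs j n} \<subseteq> {n \<in> I k. q' \<subseteq> qs j n}"
    proof
      fix n assume n: "n \<in> {n \<in> I k. t2 \<in> qs j n}"
      then have "qs j n \<in> Ps" unfolding Ps_def W_def using j k by blast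
      then show "n \<in> {n \<in> I k. q' \<subseteq> qs j n}" using QP(3) n by auto
    qed
    then have "card {n \<in> I k. t2 \<in> qs j n} \<le> card {n \<in> I k. q' \<subseteq> qs j n}"
      by (intro card_mono) (auto simp: Ifin)
    then show "fr I (qs j) t2 k \<le> real (card {n \<in> I k. q' \<subseteq> qs j n}) / real (card (I k))"
      unfolding fr_def by (intro divide_right_mono) auto
  qed simp
  show ?thesis
  proof (intro exI[of _ u] exI[of _ q'] conjI allI impI)
    show "finite u" "u \<noteq> {}" "u \<inter> {..<kstar} = {}" using u by auto
    show "in_E q'" "q' \<subseteq> q" using QP by auto
  next
    fix i assume "i < mstar"
    then have "\<bar>real (card (u \<inter> B i)) / real (card u) - \<Xi> (B i)\<bar> < \<epsilon> / 2" by (rule uB)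
    then show "\<Xi> (B i) - \<epsilon> < real (card (u \<inter> B i)) / real (card u)"
      "real (card (u \<inter> B i)) / real (card u) < \<Xi> (B i) + \<epsilon>"
      using eps unfolding abs_less_iff by linarith+
  next
    fix j assume "j < jstar"
    then show "(1 / real (card u)) * (\<Sum>k\<in>u. real (card {n \<in> I k. q' \<subseteq> qs j n}) / real (card (I k)))
      \<ge> 1 - l - \<epsilon>" using ratio avg_t2 by fastforce
  qed
qed

theorem lemma1:
  fixes I :: "nat \<Rightarrow> nat set" and \<Xi> :: "nat set \<Rightarrow> real"
  assumes "interval_partition I"
    and "filterlim (\<lambda>k. card (I k)) at_top sequentially"
    and "FAM \<Xi>"
  shows "\<exists>limf. (\<forall>qs. (\<forall>n. in_E (qs n)) \<longrightarrow> in_E (limf qs)) \<and>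
               strong_FAM_limit_intervals I \<Xi> limf"
proof -
  obtain b where b: "b 0 = 0" "strict_mono b" "\<And>k. I k = {b k..<b (Suc k)}"
    using assms(1) unfolding interval_partition_def by blast
  have Ifin: "\<And>k. finite (I k)" using b(3) by simp
  have Ipos: "\<And>k. card (I k) > 0"
  proof -
    fix k
    have "b k < b (Suc k)" using b(2) by (simp add: strict_mono_def)
    then show "card (I k) > 0" using b(3)[of k] by simp
  qed
  have F: "FAM \<Xi>" by (rule assms(3))
  show ?thesis
  proof (intro exI[of _ "limfun I \<Xi>"] conjI allI impI)
    fix qs :: "nat \<Rightarrow> nat list set"
    assume "\<forall>n. in_E (qs n)"
    then show "in_E (limfun I \<Xi> qs)" by (rule limfun_in_E[OF F Ifin Ipos])
  next
    show "strong_FAM_limit_intervals I \<Xi> (limfun I \<Xi>)"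
      unfolding strong_FAM_limit_intervals_def
    proof (intro allI impI, elim conjE)
      fix s :: "nat list" and l :: real and jstar :: nat and qs :: "nat \<Rightarrow> nat \<Rightarrow> nat list set"
        and \<epsilon> :: real and kstar :: nat and B :: "nat \<Rightarrow> nat set" and mstar :: nat and q :: "nat list set"
      assume SL: "\<forall>j<jstar. sl_sequence s l (qs j)" and eps: "\<epsilon> > 0"
        and qE: "in_E q" and qsub: "\<forall>j<jstar. q \<subseteq> limfun I \<Xi> (qs j)"
      show "\<exists>u q'. finite u \<and> u \<noteq> {} \<and> u \<inter> {..<kstar} = {} \<and> in_E q' \<and> q' \<subseteq> q \<and>
         (\<forall>m<mstar. \<Xi> (B m) - \<epsilon> < real (card (u \<inter> B m)) / real (card u) \<and>
                    real (card (u \<inter> B m)) / real (card u) < \<Xi> (B m) + \<epsilon>) \<and>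
         (\<forall>j<jstar. (1 / real (card u)) *
             (\<Sum>k\<in>u. real (card {n \<in> I k. q' \<subseteq> qs j n}) / real (card (I k)))
           \<ge> 1 - l - \<epsilon>)"
        by (rule main_strong[OF F Ifin Ipos SL eps qE qsub])
    qed
  qed
qed

end
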